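(* Let $x=(x_1,\dots,x_n)$ be variables, $f=(f_1,\dots,f_n)$ differential-free terms such that the ODE $x'=f(x)$ locally evolves $x$ (in every state the value of $f$ is not the zero vector), $P$ and $Q$ semianalytic formulas, and $y=(y_1,\dots,y_n)$ variables fresh in $[x'=f(x)\,\&\,Q]P$. Then the formula $$[x'=f(x)\&Q]P\;\leftrightarrow\;\forall y\,[x'=f(x)\,\&\,Q\wedge(P\vee x=y)]\Big(x=y\rightarrow P\wedge\big(\langle x'=f(x)\&Q\vee x=y\rangle x\neq y\rightarrow\langle x'=f(x)\&P\vee x=y\rangle x\neq y\big)\Big)$$ is valid.
   Context: Variables are real-valued; each variable $x$ has a differential variable $x'$. A state is a map from variables to $\mathbb{R}$. Terms are built from variables, rational constants, $+$, $\cdot$ and finitely many fixed function symbols interpreted as $C^\infty$ functions $\mathbb{R}^k\to\mathbb{R}$, evaluated as usual; differential-free terms contain no differential variables. Semianalytic formulas are built from comparisons $e\sim\tilde e$ ($\sim\in\{=,\ge,>\}$) of differential-free terms by $\wedge,\vee,\neg$. For vectors, $x=y$ abbreviates $\bigwedge_i x_i=y_i$, $x\neq y$ its negation, and $\forall y$ quantifies all $y_i$. Semantics of ODEs: $(\omega,\nu)\in[\![x'=f(x)\&R]\!]$ iff there are $T\ge0$ and $\varphi:[0,T]\to$ states with $\varphi(0)=\omega$ on all variables except $x'$, $\varphi(T)=\nu$, and for all $\zeta\in[0,T]$: $\varphi(\zeta)$ satisfies $x'=f(x)\wedge R$, $\varphi(\zeta)$ agrees with $\varphi(0)$ on variables other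 than $x,x'$, and, if $T>0$, $t\mapsto\varphi(t)(x)$ is differentiable at $\zeta$ with derivative $\varphi(\zeta)(x')$. $\omega\models[\alpha]\phi$ iff $\nu\models\phi$ for all $\nu$ with $(\omega,\nu)\in[\![\alpha]\!]$; $\omega\models\langle\alpha\rangle\phi$ iff $\nu\models\phi$ for some such $\nu$. A formula is valid if true in all states. *)

theory Defs
  imports Complex_Main
begin

datatype 'v var = Plain 'v | Diff 'v

type_synonym 'v state = "'v var \<Rightarrow> real"

datatype ('v, 'f) trm =
    Var 'v
  | DVar 'v
  | Const rat
  | Plus "('v, 'f) trm" "('v, 'f) trm"
  | Times "('v, 'f) trm" "('v, 'f) trm"
  | Fn 'f "('v, 'f) trm list"

fun teval :: "('f \<Rightarrow> real list \<Rightarrow> real) \<Rightarrow> ('v, 'f) trm \<Rightarrow> 'v state \<Rightarrow> real" where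
  "teval I (Var v) \<omega> = \<omega> (Plain v)"
| "teval I (DVar v) \<omega> = \<omega> (Diff v)"
| "teval I (Const c) \<omega> = of_rat c"
| "teval I (Plus a b) \<omega> = teval I a \<omega> + teval I b \<omega>"
| "teval I (Times a b) \<omega> = teval I a \<omega> * teval I b \<omega>"
| "teval I (Fn g as) \<omega> = I g (map (\<lambda>a. teval I a \<omega>) as)"

fun dfree :: "('v, 'f) trm \<Rightarrow> bool" where
  "dfree (DVar v) = False"
| "dfree (Plus a b) = (dfree a \<and> dfree b)"
| "dfree (Times a b) = (dfree a \<and> dfree b)"
| "dfree (Fn g as) = (\<forall>a\<in>set as. dfree a)"
| "dfree _ = True"

fun twf :: "('f \<Rightarrow> nat) \<Rightarrow> ('v, 'f) trm \<Rightarrow> bool" where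
  "twf ar (Plus a b) = (twf ar a \<and> twf ar b)"
| "twf ar (Times a b) = (twf ar a \<and> twf ar b)"
| "twf ar (Fn g as) = (length as = ar g \<and> (\<forall>a\<in>set as. twf ar a))"
| "twf ar _ = True"

fun tvars :: "('v, 'f) trm \<Rightarrow> 'v var set" where
  "tvars (Var v) = {Plain v}"
| "tvars (DVar v) = {Diff v}"
| "tvars (Const c) = {}"
| "tvars (Plus a b) = tvars a \<union> tvars b"
| "tvars (Times a b) = tvars a \<union> tvars b"
| "tvars (Fn g as) = \<Union> (tvars ` set as)"

definition partial_l :: "nat \<Rightarrow> (real list \<Rightarrow> real) \<Rightarrow> real list \<Rightarrow> real" where
  "partial_l i g = (\<lambda>xs. THE D. ((\<lambda>t. g (xs[i := t])) has_real_derivative D) (at (xs ! i)))"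

fun partials_l :: "nat list \<Rightarrow> (real list \<Rightarrow> real) \<Rightarrow> real list \<Rightarrow> real" where
  "partials_l [] g = g"
| "partials_l (i # is) g = partial_l i (partials_l is g)"

definition lcont :: "nat \<Rightarrow> (real list \<Rightarrow> real) \<Rightarrow> real list \<Rightarrow> bool" where
  "lcont k h xs \<longleftrightarrow>
     (\<forall>X. (\<forall>m. length (X m) = k) \<longrightarrow> (\<forall>i<k. (\<lambda>m. X m ! i) \<longlonglongrightarrow> xs ! i)
          \<longrightarrow> (\<lambda>m. h (X m)) \<longlonglongrightarrow> h xs)"

definition smooth_fn :: "nat \<Rightarrow> (real list \<Rightarrow> real) \<Rightarrow> bool" where
  "smooth_fn k g \<longleftrightarrow>
     (\<forall>is. set is \<subseteq> {..<k} \<longrightarrow>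
        (\<forall>xs. length xs = k \<longrightarrow>
           lcont k (partials_l is g) xs \<and>
           (\<forall>i<k. (\<lambda>t. partials_l is g (xs[i := t])) differentiable (at (xs ! i)))))"

datatype cmp = Eq | Geq | Gt

fun cmp_sem :: "cmp \<Rightarrow> real \<Rightarrow> real \<Rightarrow> bool" where
  "cmp_sem Eq a b = (a = b)"
| "cmp_sem Geq a b = (a \<ge> b)"
| "cmp_sem Gt a b = (a > b)"

text \<open>Box xs fs R P is [x'=f(x) & R]P with x = xs, f = fs; similarly Dia.\<close>
datatype ('v, 'f) fml =
    Cmp "('v, 'f) trm" cmp "('v, 'f) trm"
  | Not "('v, 'f) fml"
  | And "('v, 'f) fml" "('v, 'f) fml"
  | Or "('v, 'f) fml" "('v, 'f) fml"
  | Forall 'v "('v, 'f) fml"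
  | Box "'v list" "('v, 'f) trm list" "('v, 'f) fml" "('v, 'f) fml"
  | Dia "'v list" "('v, 'f) trm list" "('v, 'f) fml" "('v, 'f) fml"

definition Imp :: "('v, 'f) fml \<Rightarrow> ('v, 'f) fml \<Rightarrow> ('v, 'f) fml" where
  "Imp a b = Or (Not a) b"

definition Iff :: "('v, 'f) fml \<Rightarrow> ('v, 'f) fml \<Rightarrow> ('v, 'f) fml" where
  "Iff a b = And (Imp a b) (Imp b a)"

fun ForallV :: "'v list \<Rightarrow> ('v, 'f) fml \<Rightarrow> ('v, 'f) fml" where
  "ForallV [] p = p"
| "ForallV (y # ys) p = Forall y (ForallV ys p)"

fun EqV :: "'v list \<Rightarrow> 'v list \<Rightarrow> ('v, 'f) fml" where
  "EqV [x] [y] = Cmp (Var x) Eq (Var y)"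
| "EqV (x # xs) (y # ys) = And (Cmp (Var x) Eq (Var y)) (EqV xs ys)"
| "EqV _ _ = Cmp (Const 0) Eq (Const 0)"

definition NeqV :: "'v list \<Rightarrow> 'v list \<Rightarrow> ('v, 'f) fml" where
  "NeqV xs ys = Not (EqV xs ys)"

definition ode_rel :: "('f \<Rightarrow> real list \<Rightarrow> real) \<Rightarrow> 'v list \<Rightarrow> ('v, 'f) trm list
    \<Rightarrow> ('v state \<Rightarrow> bool) \<Rightarrow> 'v state \<Rightarrow> 'v state \<Rightarrow> bool" where
  "ode_rel I xs fs Rs \<omega> \<nu> \<longleftrightarrow>
     (\<exists>T::real. T \<ge> 0 \<and> (\<exists>\<phi> :: real \<Rightarrow> 'v state.
        (\<forall>z. z \<notin> Diff ` set xs \<longrightarrow> \<phi> 0 z = \<omega> z) \<and>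
        \<phi> T = \<nu> \<and>
        (\<forall>\<zeta>\<in>{0..T}.
           (\<forall>i<length xs. \<phi> \<zeta> (Diff (xs ! i)) = teval I (fs ! i) (\<phi> \<zeta>)) \<and>
           Rs (\<phi> \<zeta>) \<and>
           (\<forall>z. z \<notin> Plain ` set xs \<union> Diff ` set xs \<longrightarrow> \<phi> \<zeta> z = \<phi> 0 z) \<and>
           (T > 0 \<longrightarrow> (\<forall>i<length xs.
              ((\<lambda>t. \<phi> t (Plain (xs ! i))) has_real_derivative \<phi> \<zeta> (Diff (xs ! i)))
                (at \<zeta> within {0..T}))))))"

fun sem :: "('f \<Rightarrow> real list \<Rightarrow> real) \<Rightarrow> ('v, 'f) fml \<Rightarrow> 'v state \<Rightarrow> bool" where
  "sem I (Cmp a c b) \<omega> = cmp_sem c (teval I a \<omega>) (teval I b \<omega>)"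
| "sem I (Not p) \<omega> = (\<not> sem I p \<omega>)"
| "sem I (And p q) \<omega> = (sem I p \<omega> \<and> sem I q \<omega>)"
| "sem I (Or p q) \<omega> = (sem I p \<omega> \<or> sem I q \<omega>)"
| "sem I (Forall y p) \<omega> = (\<forall>r. sem I p (\<omega>(Plain y := r)))"
| "sem I (Box xs fs R p) \<omega> = (\<forall>\<nu>. ode_rel I xs fs (sem I R) \<omega> \<nu> \<longrightarrow> sem I p \<nu>)"
| "sem I (Dia xs fs R p) \<omega> = (\<exists>\<nu>. ode_rel I xs fs (sem I R) \<omega> \<nu> \<and> sem I p \<nu>)"

definition valid :: "('f \<Rightarrow> real list \<Rightarrow> real) \<Rightarrow> ('v, 'f) fml \<Rightarrow> bool" where
  "valid I p \<longleftrightarrow> (\<forall>\<omega>. sem I p \<omega>)"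

fun semianalytic :: "('v, 'f) fml \<Rightarrow> bool" where
  "semianalytic (Cmp a c b) = (dfree a \<and> dfree b)"
| "semianalytic (Not p) = semianalytic p"
| "semianalytic (And p q) = (semianalytic p \<and> semianalytic q)"
| "semianalytic (Or p q) = (semianalytic p \<and> semianalytic q)"
| "semianalytic _ = False"

fun fwf :: "('f \<Rightarrow> nat) \<Rightarrow> ('v, 'f) fml \<Rightarrow> bool" where
  "fwf ar (Cmp a c b) = (twf ar a \<and> twf ar b)"
| "fwf ar (Not p) = fwf ar p"
| "fwf ar (And p q) = (fwf ar p \<and> fwf ar q)"
| "fwf ar (Or p q) = (fwf ar p \<and> fwf ar q)"
| "fwf ar (Forall y p) = fwf ar p"
| "fwf ar (Box xs fs R p) = ((\<forall>f\<in>set fs. twf ar f) \<and> fwf ar R \<and> fwf ar p)"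
| "fwf ar (Dia xs fs R p) = ((\<forall>f\<in>set fs. twf ar f) \<and> fwf ar R \<and> fwf ar p)"

fun fvars :: "('v, 'f) fml \<Rightarrow> 'v var set" where
  "fvars (Cmp a c b) = tvars a \<union> tvars b"
| "fvars (Not p) = fvars p"
| "fvars (And p q) = fvars p \<union> fvars q"
| "fvars (Or p q) = fvars p \<union> fvars q"
| "fvars (Forall y p) = insert (Plain y) (fvars p)"
| "fvars (Box xs fs R p) = Plain ` set xs \<union> Diff ` set xs \<union> \<Union> (tvars ` set fs) \<union> fvars R \<union> fvars p"
| "fvars (Dia xs fs R p) = Plain ` set xs \<union> Diff ` set xs \<union> \<Union> (tvars ` set fs) \<union> fvars R \<union> fvars p"

definition fresh_in :: "'v \<Rightarrow> ('v, 'f) fml \<Rightarrow> bool" where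
  "fresh_in y p \<longleftrightarrow> Plain y \<notin> fvars p \<and> Diff y \<notin> fvars p"

end

theory Submission
  imports Defs "HOL-Analysis.Analysis"
begin


lemma teval_coinc:
  "(\<And>z. z \<in> tvars t \<Longrightarrow> a z = b z) \<Longrightarrow> teval I t a = teval I t b"
proof (induction t)
  case (Fn g as)
  then show ?case by (auto intro!: arg_cong[where f="I g"] map_cong)
qed auto

lemma dfree_tvars: "dfree t \<Longrightarrow> tvars t \<subseteq> range Plain"
  by (induction t) auto

lemma sem_sa_coinc:
  "semianalytic p \<Longrightarrow> (\<And>z. z \<in> fvars p \<Longrightarrow> a z = b z) \<Longrightarrow> sem I p a = sem I p b"
proof (induction p)
  case (Cmp x c y)
  then show ?case using teval_coinc[of x a b I] teval_coinc[of y a b I] by auto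
qed auto

lemma sa_fvars: "semianalytic p \<Longrightarrow> fvars p \<subseteq> range Plain"
  by (induction p) (use dfree_tvars in auto)

lemma sem_sa_plain:
  "semianalytic p \<Longrightarrow> (\<And>v. a (Plain v) = b (Plain v)) \<Longrightarrow> sem I p a = sem I p b"
  by (rule sem_sa_coinc) (use sa_fvars in auto)

lemma teval_dfree_plain:
  "dfree t \<Longrightarrow> (\<And>v. a (Plain v) = b (Plain v)) \<Longrightarrow> teval I t a = teval I t b"
  by (rule teval_coinc) (use dfree_tvars in auto)

lemma sem_EqV:
  "length xs = length ys \<Longrightarrow>
   sem I (EqV xs ys) s \<longleftrightarrow> (\<forall>i<length xs. s (Plain (xs!i)) = s (Plain (ys!i)))"
proof (induction xs arbitrary: ys)
  case Nil
  then show ?case by simp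
next
  case (Cons x xs)
  then obtain y ys' where ys: "ys = y # ys'" "length ys' = length xs" by (cases ys) auto
  have eq: "(\<forall>i<length (x # xs). s (Plain ((x # xs)!i)) = s (Plain ((y # ys')!i))) \<longleftrightarrow>
     s (Plain x) = s (Plain y) \<and> (\<forall>i<length xs. s (Plain (xs!i)) = s (Plain (ys'!i)))"
    by (simp add: All_less_Suc2)
  show ?case
  proof (cases xs)
    case Nil
    then show ?thesis using ys eq by simp
  next
    case (Cons x2 xs2)
    then obtain y2 ys2 where "ys' = y2 # ys2" using ys by (cases ys') auto
    then show ?thesis using ys eq Cons Cons.IH[of ys'] by simp
  qed
qed

lemma sem_ForallV:
  "sem I (ForallV ys p) \<omega> \<longleftrightarrow> (\<forall>\<omega>'. (\<forall>z. z \<notin> Plain ` set ys \<longrightarrow> \<omega>' z = \<omega> z) \<longrightarrow> sem I p \<omega>')"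
proof (induction ys arbitrary: \<omega>)
  case Nil
  then show ?case by (auto intro: ext)
next
  case (Cons y ys)
  show ?case
  proof
    assume L: "sem I (ForallV (y # ys) p) \<omega>"
    show "\<forall>\<omega>'. (\<forall>z. z \<notin> Plain ` set (y # ys) \<longrightarrow> \<omega>' z = \<omega> z) \<longrightarrow> sem I p \<omega>'"
    proof (intro allI impI)
      fix \<omega>' assume a: "\<forall>z. z \<notin> Plain ` set (y # ys) \<longrightarrow> \<omega>' z = \<omega> z"
      from L have "sem I (ForallV ys p) (fun_upd \<omega> (Plain y) (\<omega>' (Plain y)))" by simp
      with Cons.IH show "sem I p \<omega>'" using a by auto
    qed
  next
    assume R: "\<forall>\<omega>'. (\<forall>z. z \<notin> Plain ` set (y # ys) \<longrightarrow> \<omega>' z = \<omega> z) \<longrightarrow> sem I p \<omega>'"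
    show "sem I (ForallV (y # ys) p) \<omega>"
    proof (simp, intro allI)
      fix r
      show "sem I (ForallV ys p) (fun_upd \<omega> (Plain y) r)"
        unfolding Cons.IH using R by auto
    qed
  qed
qed

lemma sem_Imp[simp]: "sem I (Imp a b) s = (sem I a s \<longrightarrow> sem I b s)"
  by (simp add: Imp_def)
lemma sem_Iff[simp]: "sem I (Iff a b) s = (sem I a s \<longleftrightarrow> sem I b s)"
  by (auto simp add: Iff_def)
lemma sem_NeqV[simp]: "sem I (NeqV a b) s = (\<not> sem I (EqV a b) s)"
  by (simp add: NeqV_def)

definition isrun :: "('f \<Rightarrow> real list \<Rightarrow> real) \<Rightarrow> 'v list \<Rightarrow> ('v, 'f) trm list
    \<Rightarrow> ('v state \<Rightarrow> bool) \<Rightarrow> real \<Rightarrow> (real \<Rightarrow> 'v state) \<Rightarrow> bool" where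
  "isrun I xs fs R T \<phi> \<longleftrightarrow> T \<ge> 0 \<and>
        (\<forall>\<zeta>\<in>{0..T}.
           (\<forall>i<length xs. \<phi> \<zeta> (Diff (xs ! i)) = teval I (fs ! i) (\<phi> \<zeta>)) \<and>
           R (\<phi> \<zeta>) \<and>
           (\<forall>z. z \<notin> Plain ` set xs \<union> Diff ` set xs \<longrightarrow> \<phi> \<zeta> z = \<phi> 0 z) \<and>
           (T > 0 \<longrightarrow> (\<forall>i<length xs.
              ((\<lambda>t. \<phi> t (Plain (xs ! i))) has_real_derivative \<phi> \<zeta> (Diff (xs ! i)))
                (at \<zeta> within {0..T}))))"

lemma ode_rel_iff:
  "ode_rel I xs fs R \<omega> \<nu> \<longleftrightarrow> (\<exists>T \<phi>. isrun I xs fs R T \<phi> \<and>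
      (\<forall>z. z \<notin> Diff ` set xs \<longrightarrow> \<phi> 0 z = \<omega> z) \<and> \<phi> T = \<nu>)"
  unfolding ode_rel_def isrun_def by blast

lemma isrun_mono:
  "isrun I xs fs R T \<phi> \<Longrightarrow> (\<And>\<zeta>. \<zeta> \<in> {0..T} \<Longrightarrow> R (\<phi> \<zeta>) \<Longrightarrow> R' (\<phi> \<zeta>)) \<Longrightarrow> isrun I xs fs R' T \<phi>"
  unfolding isrun_def by blast

lemma isrunI:
  assumes "T \<ge> 0"
    and "\<And>\<zeta> i. \<zeta> \<in> {0..T} \<Longrightarrow> i < length xs \<Longrightarrow> \<phi> \<zeta> (Diff (xs ! i)) = teval I (fs ! i) (\<phi> \<zeta>)"
    and "\<And>\<zeta>. \<zeta> \<in> {0..T} \<Longrightarrow> R (\<phi> \<zeta>)"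
    and "\<And>\<zeta> z. \<zeta> \<in> {0..T} \<Longrightarrow> z \<notin> Plain ` set xs \<Longrightarrow> z \<notin> Diff ` set xs \<Longrightarrow> \<phi> \<zeta> z = \<phi> 0 z"
    and "\<And>\<zeta> i. \<zeta> \<in> {0..T} \<Longrightarrow> T > 0 \<Longrightarrow> i < length xs \<Longrightarrow>
          ((\<lambda>t. \<phi> t (Plain (xs ! i))) has_real_derivative \<phi> \<zeta> (Diff (xs ! i))) (at \<zeta> within {0..T})"
  shows "isrun I xs fs R T \<phi>"
  unfolding isrun_def using assms by blast

lemma isrunD:
  assumes "isrun I xs fs R T \<phi>"
  shows "T \<ge> 0"
    and "\<And>\<zeta> i. \<zeta> \<in> {0..T} \<Longrightarrow> i < length xs \<Longrightarrow> \<phi> \<zeta> (Diff (xs ! i)) = teval I (fs ! i) (\<phi> \<zeta>)"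
    and "\<And>\<zeta>. \<zeta> \<in> {0..T} \<Longrightarrow> R (\<phi> \<zeta>)"
    and "\<And>\<zeta> z. \<zeta> \<in> {0..T} \<Longrightarrow> z \<notin> Plain ` set xs \<Longrightarrow> z \<notin> Diff ` set xs \<Longrightarrow> \<phi> \<zeta> z = \<phi> 0 z"
    and "\<And>\<zeta> i. \<zeta> \<in> {0..T} \<Longrightarrow> T > 0 \<Longrightarrow> i < length xs \<Longrightarrow>
          ((\<lambda>t. \<phi> t (Plain (xs ! i))) has_real_derivative \<phi> \<zeta> (Diff (xs ! i))) (at \<zeta> within {0..T})"
  using assms unfolding isrun_def by blast+

lemma isrun_prefix:
  assumes r: "isrun I xs fs R T \<phi>" and "0 \<le> T'" "T' \<le> T"
  shows "isrun I xs fs R T' \<phi>"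
proof (rule isrunI)
  have sub: "{0..T'} \<subseteq> {0..T}" using assms by auto
  show "0 \<le> T'" by fact
  fix \<zeta> assume z': "\<zeta> \<in> {0..T'}"
  then have z: "\<zeta> \<in> {0..T}" using sub by blast
  show "R (\<phi> \<zeta>)" using isrunD(3)[OF r z] .
  show "\<phi> \<zeta> (Diff (xs ! i)) = teval I (fs ! i) (\<phi> \<zeta>)" if "i < length xs" for i
    using isrunD(2)[OF r z that] .
  show "\<phi> \<zeta> z = \<phi> 0 z" if "z \<notin> Plain ` set xs" "z \<notin> Diff ` set xs" for z
    using isrunD(4)[OF r z that] .
  show "((\<lambda>t. \<phi> t (Plain (xs ! i))) has_real_derivative \<phi> \<zeta> (Diff (xs ! i))) (at \<zeta> within {0..T'})"
    if "T' > 0" "i < length xs" for i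
    using isrunD(5)[OF r z _ that(2)] that(1) \<open>T' \<le> T\<close> has_field_derivative_subset[OF _ sub] by auto
qed



lemma deriv_eq_on:
  "(f has_real_derivative D) (at x within S) \<Longrightarrow> x \<in> S \<Longrightarrow> (\<And>y. y \<in> S \<Longrightarrow> f y = g y)
   \<Longrightarrow> (g has_real_derivative D) (at x within S)"
  using has_field_derivative_transform_within[of f D x S 1 g] by auto

lemma deriv_shift:
  assumes "(f has_real_derivative D) (at (x + c) within {a..b})"
  shows "((\<lambda>s. f (s + c)) has_real_derivative D) (at x within {a - c..b - c})"
proof -
  have im: "(\<lambda>s. s + c) ` {a - c..b - c} = {a..b}" by simp
  have "(f \<circ> (\<lambda>s. s + c) has_real_derivative D * 1) (at x within {a - c..b - c})"
    by (rule DERIV_image_chain) (use assms im in \<open>auto intro!: derivative_eq_intros\<close>)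
  then show ?thesis by (simp add: o_def)
qed

lemma deriv_bot:
  fixes x :: real
  assumes "x \<notin> S" "closed S"
  shows "(f has_real_derivative D) (at x within S)"
proof -
  have "at x within S = bot" using not_in_closure_trivial_limitI[of x S] assms closure_closed by auto
  then show ?thesis by (simp add: has_field_derivative_iff)
qed

lemma isrun_suffix:
  assumes r: "isrun I xs fs R T \<phi>" and t0: "0 \<le> t0" "t0 \<le> T"
  shows "isrun I xs fs R (T - t0) (\<lambda>s. \<phi> (s + t0))"
proof (rule isrunI)
  show "0 \<le> T - t0" using t0 by simp
  fix \<zeta> assume z': "\<zeta> \<in> {0..T - t0}"
  then have z: "\<zeta> + t0 \<in> {0..T}" using t0 by auto
  have z0: "0 + t0 \<in> {0..T}" using t0 by auto
  show "R (\<phi> (\<zeta> + t0))" using isrunD(3)[OF r z] .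
  show "\<phi> (\<zeta> + t0) (Diff (xs ! i)) = teval I (fs ! i) (\<phi> (\<zeta> + t0))" if "i < length xs" for i
    using isrunD(2)[OF r z that] .
  show "\<phi> (\<zeta> + t0) z = \<phi> (0 + t0) z" if "z \<notin> Plain ` set xs" "z \<notin> Diff ` set xs" for z
    using isrunD(4)[OF r z that] isrunD(4)[OF r z0 that] by simp
  show "((\<lambda>t. \<phi> (t + t0) (Plain (xs ! i))) has_real_derivative \<phi> (\<zeta> + t0) (Diff (xs ! i))) (at \<zeta> within {0..T - t0})"
    if "T - t0 > 0" "i < length xs" for i
  proof -
    have "((\<lambda>t. \<phi> t (Plain (xs ! i))) has_real_derivative \<phi> (\<zeta> + t0) (Diff (xs ! i))) (at (\<zeta> + t0) within {0..T})"
      using isrunD(5)[OF r z _ that(2)] that(1) t0 by simp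
    from deriv_shift[OF this] have "((\<lambda>t. \<phi> (t + t0) (Plain (xs ! i))) has_real_derivative \<phi> (\<zeta> + t0) (Diff (xs ! i))) (at \<zeta> within {0 - t0..T - t0})" .
    then show ?thesis by (rule has_field_derivative_subset) (use t0 in auto)
  qed
qed

lemma isrun_start:
  assumes r: "isrun I xs fs R T \<psi>" and len: "length fs = length xs"
    and df: "\<And>f. f \<in> set fs \<Longrightarrow> dfree f"
    and ag: "\<And>z. z \<notin> Diff ` set xs \<Longrightarrow> \<psi> 0 z = \<nu> z"
    and nu: "\<And>i. i < length xs \<Longrightarrow> \<nu> (Diff (xs ! i)) = teval I (fs ! i) \<nu>"
  shows "\<psi> 0 = \<nu>"
proof
  fix z
  show "\<psi> 0 z = \<nu> z"
  proof (cases "z \<in> Diff ` set xs")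
    case True
    then obtain i where i: "i < length xs" "z = Diff (xs ! i)" by (auto simp: in_set_conv_nth)
    have 0: "0 \<in> {0..T}" using isrunD(1)[OF r] by simp
    have "\<psi> 0 z = teval I (fs ! i) (\<psi> 0)" using isrunD(2)[OF r 0 i(1)] i by simp
    also have "\<dots> = teval I (fs ! i) \<nu>"
      by (rule teval_dfree_plain) (use df len i ag in auto)
    also have "\<dots> = \<nu> z" using nu i by simp
    finally show ?thesis .
  qed (use ag in auto)
qed

lemma isrun_concat:
  assumes r1: "isrun I xs fs R T1 \<phi>" and r2: "isrun I xs fs R T2 \<psi>" and st: "\<psi> 0 = \<phi> T1"
  shows "isrun I xs fs R (T1 + T2) (\<lambda>t. if t \<le> T1 then \<phi> t else \<psi> (t - T1))"
    (is "isrun _ _ _ _ _ ?\<chi>")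
proof -
  have T1: "T1 \<ge> 0" using isrunD(1)[OF r1] .
  have T2: "T2 \<ge> 0" using isrunD(1)[OF r2] .
  have chi0: "?\<chi> 0 = \<phi> 0" using T1 by simp
  have p0: "0 \<in> {0..T1}" "T1 \<in> {0..T1}" using T1 by auto
  have q0: "0 \<in> {0..T2}" using T2 by auto
  show ?thesis
  proof (rule isrunI)
    show "0 \<le> T1 + T2" using T1 T2 by simp
    fix \<zeta> assume z: "\<zeta> \<in> {0..T1 + T2}"
    have C1: "\<zeta> \<le> T1 \<Longrightarrow> \<zeta> \<in> {0..T1} \<and> ?\<chi> \<zeta> = \<phi> \<zeta>" using z by auto
    have C2: "\<not> \<zeta> \<le> T1 \<Longrightarrow> \<zeta> - T1 \<in> {0..T2} \<and> ?\<chi> \<zeta> = \<psi> (\<zeta> - T1)" using z by auto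
    show "R (?\<chi> \<zeta>)"
    proof (cases "\<zeta> \<le> T1")
      case True with C1 isrunD(3)[OF r1, of \<zeta>] show ?thesis by simp
    next
      case False with C2 isrunD(3)[OF r2, of "\<zeta> - T1"] show ?thesis by simp
    qed
    show "?\<chi> \<zeta> (Diff (xs ! i)) = teval I (fs ! i) (?\<chi> \<zeta>)" if "i < length xs" for i
    proof (cases "\<zeta> \<le> T1")
      case True with C1 isrunD(2)[OF r1 _ that, of \<zeta>] show ?thesis by simp
    next
      case False with C2 isrunD(2)[OF r2 _ that, of "\<zeta> - T1"] show ?thesis by simp
    qed
    show "?\<chi> \<zeta> z = ?\<chi> 0 z" if "z \<notin> Plain ` set xs" "z \<notin> Diff ` set xs" for z
    proof -
      have a: "\<phi> t z = \<phi> 0 z" if "t \<in> {0..T1}" for t using isrunD(4)[OF r1 that] \<open>z \<notin> Plain ` set xs\<close> \<open>z \<notin> Diff ` set xs\<close> .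
      have b: "\<psi> t z = \<psi> 0 z" if "t \<in> {0..T2}" for t using isrunD(4)[OF r2 that] \<open>z \<notin> Plain ` set xs\<close> \<open>z \<notin> Diff ` set xs\<close> .
      have c: "\<psi> 0 z = \<phi> 0 z" using st a[OF p0(2)] by simp
      show ?thesis
      proof (cases "\<zeta> \<le> T1")
        case True with C1 a[of \<zeta>] chi0 show ?thesis by simp
      next
        case False with C2 b[of "\<zeta> - T1"] c chi0 show ?thesis by simp
      qed
    qed
    show "((\<lambda>t. ?\<chi> t (Plain (xs ! i))) has_real_derivative ?\<chi> \<zeta> (Diff (xs ! i))) (at \<zeta> within {0..T1 + T2})"
      if pos: "T1 + T2 > 0" and i: "i < length xs" for i
    proof -
      let ?f = "\<lambda>t. ?\<chi> t (Plain (xs ! i))"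
      have A: "(?f has_real_derivative ?\<chi> \<zeta> (Diff (xs ! i))) (at \<zeta> within {0..T1})" if "T1 > 0"
      proof (cases "\<zeta> \<le> T1")
        case True
        then have zz: "\<zeta> \<in> {0..T1}" using z by auto
        have "((\<lambda>t. \<phi> t (Plain (xs ! i))) has_real_derivative \<phi> \<zeta> (Diff (xs ! i))) (at \<zeta> within {0..T1})"
          using isrunD(5)[OF r1 zz that i] .
        have ch: "?\<chi> \<zeta> = \<phi> \<zeta>" using True by simp
        show ?thesis unfolding ch by (rule deriv_eq_on[OF \<open>((\<lambda>t. \<phi> t (Plain (xs ! i))) has_real_derivative \<phi> \<zeta> (Diff (xs ! i))) (at \<zeta> within {0..T1})\<close>]) (use zz in auto)
      next
        case False
        then show ?thesis by (intro deriv_bot) auto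
      qed
      have B: "(?f has_real_derivative ?\<chi> \<zeta> (Diff (xs ! i))) (at \<zeta> within {T1..T1+T2})" if "T2 > 0"
      proof (cases "\<zeta> \<ge> T1")
        case True
        then have zz: "\<zeta> - T1 \<in> {0..T2}" using z by auto
        have ch: "?\<chi> \<zeta> = \<psi> (\<zeta> - T1)" using True st by auto
        have "((\<lambda>t. \<psi> t (Plain (xs ! i))) has_real_derivative \<psi> (\<zeta> - T1) (Diff (xs ! i))) (at (\<zeta> + (- T1)) within {0..T2})"
          using isrunD(5)[OF r2 zz that i] by simp
        from deriv_shift[OF this] have "((\<lambda>t. \<psi> (t + - T1) (Plain (xs ! i))) has_real_derivative \<psi> (\<zeta> - T1) (Diff (xs ! i))) (at \<zeta> within {0 - - T1..T2 - - T1})" .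
        then have "((\<lambda>t. \<psi> (t - T1) (Plain (xs ! i))) has_real_derivative \<psi> (\<zeta> - T1) (Diff (xs ! i))) (at \<zeta> within {T1..T1+T2})"
          by (simp add: add.commute)
        then show ?thesis unfolding ch by (rule deriv_eq_on) (use True z st in auto)
      next
        case False
        then show ?thesis by (intro deriv_bot) auto
      qed
      show ?thesis
      proof (cases "T1 = 0")
        case True
        then have "T2 > 0" using pos by simp
        from B[OF this] show ?thesis using True by simp
      next
        case False
        then have T1p: "T1 > 0" using T1 by simp
        show ?thesis
        proof (cases "T2 = 0")
          case True
          from A[OF T1p] show ?thesis using True by simp
        next
          case False
          then have T2p: "T2 > 0" using T2 by simp
          have un: "{0..T1 + T2} = {0..T1} \<union> {T1..T1+T2}" using T1 T2 by auto
          show ?thesis using A[OF T1p] B[OF T2p] unfolding un has_field_derivative_iff Lim_within_Un by simp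
        qed
      qed
    qed
  qed
qed

definition mrg :: "'v var set \<Rightarrow> 'v state \<Rightarrow> 'v state \<Rightarrow> 'v state" where
  "mrg W c s = (\<lambda>z. if z \<in> W then c z else s z)"

lemma isrun_merge:
  assumes r: "isrun I xs fs R T \<phi>"
    and W1: "\<And>v. v \<in> set xs \<Longrightarrow> Plain v \<notin> W \<and> Diff v \<notin> W"
    and W2: "\<And>i z. i < length xs \<Longrightarrow> z \<in> tvars (fs ! i) \<Longrightarrow> z \<notin> W"
    and RR: "\<And>\<zeta>. \<zeta> \<in> {0..T} \<Longrightarrow> R (\<phi> \<zeta>) \<Longrightarrow> R' (mrg W c (\<phi> \<zeta>))"
  shows "isrun I xs fs R' T (\<lambda>t. mrg W c (\<phi> t))"
proof (rule isrunI)
  show "0 \<le> T" using isrunD(1)[OF r] .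
  fix \<zeta> assume z: "\<zeta> \<in> {0..T}"
  show "R' (mrg W c (\<phi> \<zeta>))" using RR[OF z isrunD(3)[OF r z]] .
  show "mrg W c (\<phi> \<zeta>) (Diff (xs ! i)) = teval I (fs ! i) (mrg W c (\<phi> \<zeta>))" if i: "i < length xs" for i
  proof -
    have "teval I (fs ! i) (mrg W c (\<phi> \<zeta>)) = teval I (fs ! i) (\<phi> \<zeta>)"
      by (rule teval_coinc) (use W2[OF i] in \<open>auto simp: mrg_def\<close>)
    then show ?thesis using isrunD(2)[OF r z i] W1[of "xs ! i"] i by (auto simp: mrg_def)
  qed
  show "mrg W c (\<phi> \<zeta>) z = mrg W c (\<phi> 0) z" if "z \<notin> Plain ` set xs" "z \<notin> Diff ` set xs" for z
    using isrunD(4)[OF r z that] by (simp add: mrg_def)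
  show "((\<lambda>t. mrg W c (\<phi> t) (Plain (xs ! i))) has_real_derivative mrg W c (\<phi> \<zeta>) (Diff (xs ! i))) (at \<zeta> within {0..T})"
    if "T > 0" "i < length xs" for i
    using isrunD(5)[OF r z that] W1[of "xs ! i"] that(2) by (simp add: mrg_def)
qed

lemma local_evol:
  fixes g :: "real \<Rightarrow> real"
  assumes d: "(g has_real_derivative D) (at t0 within {0..T})" and D: "D \<noteq> 0" and t: "0 \<le> t0" "t0 < T"
  shows "\<exists>h>0. h \<le> T - t0 \<and> (\<forall>s. 0 < s \<and> s \<le> h \<longrightarrow> g (t0 + s) \<noteq> g t0)"
proof -
  have "((\<lambda>y. (g y - g t0) / (y - t0)) \<longlongrightarrow> D) (at t0 within {0..T})"
    using d by (simp add: has_field_derivative_iff)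
  then have "eventually (\<lambda>y. (g y - g t0) / (y - t0) \<noteq> 0) (at t0 within {0..T})"
    using D by (rule tendsto_imp_eventually_ne)
  then obtain d where d: "d > 0" "\<And>y. y \<in> {0..T} \<Longrightarrow> y \<noteq> t0 \<Longrightarrow> dist y t0 < d \<Longrightarrow> (g y - g t0) / (y - t0) \<noteq> 0"
    unfolding eventually_at by blast
  show ?thesis
  proof (intro exI[of _ "min (d/2) (T - t0)"] conjI allI impI)
    show "0 < min (d/2) (T - t0)" using d t by simp
    show "min (d / 2) (T - t0) \<le> T - t0" by simp
    fix s assume s: "0 < s \<and> s \<le> min (d / 2) (T - t0)"
    then have "(g (t0 + s) - g t0) / (t0 + s - t0) \<noteq> 0"
      using t d by (intro d(2)) (auto simp: dist_real_def)
    then show "g (t0 + s) \<noteq> g t0" by auto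
  qed
qed



lemma lcont_eps:
  assumes lc: "lcont k h c" and e: "e > 0"
  shows "\<exists>\<delta>>0. \<forall>z. length z = k \<longrightarrow> (\<forall>j<k. \<bar>z!j - c!j\<bar> \<le> \<delta>) \<longrightarrow> \<bar>h z - h c\<bar> < e"
proof (rule ccontr)
  assume neg: "\<not> ?thesis"
  have "\<forall>m::nat. \<exists>z. length z = k \<and> (\<forall>j<k. \<bar>z!j - c!j\<bar> \<le> 1 / (real m + 1)) \<and> \<not> \<bar>h z - h c\<bar> < e"
  proof
    fix m :: nat
    have pos: "0 < 1/(real m + 1)" by simp
    with neg show "\<exists>z. length z = k \<and> (\<forall>j<k. \<bar>z!j - c!j\<bar> \<le> 1 / (real m + 1)) \<and> \<not> \<bar>h z - h c\<bar> < e"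
      by blast
  qed
  then obtain X where X: "\<And>m. length (X m) = k" "\<And>m j. j < k \<Longrightarrow> \<bar>X m!j - c!j\<bar> \<le> 1 / (real m + 1)"
    "\<And>m. \<not> \<bar>h (X m) - h c\<bar> < e"
    by metis
  have "(\<lambda>m. X m ! j) \<longlonglongrightarrow> c ! j" if j: "j < k" for j
  proof (rule LIMSEQ_I)
    fix r :: real assume r: "0 < r"
    obtain N :: nat where N: "1 / r < N" using reals_Archimedean2 by blast
    show "\<exists>no. \<forall>n\<ge>no. norm (X n ! j - c ! j) < r"
    proof (intro exI allI impI)
      fix n assume "N \<le> n"
      then have "1 / r < real n + 1" using N by linarith
      then have "1 / (real n + 1) < r" using r by (simp add: field_simps)
      then show "norm (X n ! j - c ! j) < r" using X(2)[OF j, of n] by simp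
    qed
  qed
  then have "(\<lambda>m. h (X m)) \<longlonglongrightarrow> h c" using lc X(1) unfolding lcont_def by blast
  from LIMSEQ_D[OF this e] obtain no where "\<forall>n\<ge>no. norm (h (X n) - h c) < e" by blast
  then show False using X(3)[of no] by simp
qed

lemma smooth_deriv:
  assumes sm: "smooth_fn k g" and z: "length z = k" and j: "j < k"
  shows "((\<lambda>s. g (z[j := s])) has_real_derivative partial_l j g (z[j := t])) (at t)"
proof -
  let ?z = "z[j := t]"
  have lz: "length ?z = k" using z by simp
  have "(\<lambda>s. g (?z[j := s])) differentiable (at (?z ! j))"
    using sm lz j unfolding smooth_fn_def by (metis empty_subsetI empty_set partials_l.simps(1))
  moreover have "?z ! j = t" using z j by simp
  moreover have fe: "(\<lambda>s. g (?z[j := s])) = (\<lambda>s. g (z[j := s]))" by simp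
  ultimately have d: "(\<lambda>s. g (z[j := s])) differentiable (at t)" by simp
  then obtain D where D: "((\<lambda>s. g (z[j := s])) has_real_derivative D) (at t)"
    using DERIV_deriv_iff_real_differentiable by blast
  have "partial_l j g ?z = (THE D. ((\<lambda>s. g (?z[j := s])) has_real_derivative D) (at (?z ! j)))"
    unfolding partial_l_def by simp
  also have "\<dots> = D"
    by (rule the_equality) (use D DERIV_unique \<open>?z ! j = t\<close> in auto)
  finally show ?thesis using D by simp
qed

lemma smooth_lip:
  assumes sm: "smooth_fn k g" and c: "length c = k"
  shows "\<exists>\<delta>>0. \<exists>L\<ge>0. \<forall>a b. length a = k \<longrightarrow> length b = k \<longrightarrow>
     (\<forall>j<k. \<bar>a!j - c!j\<bar> \<le> \<delta>) \<longrightarrow> (\<forall>j<k. \<bar>b!j - c!j\<bar> \<le> \<delta>) \<longrightarrow>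
     \<bar>g a - g b\<bar> \<le> L * (\<Sum>j<k. \<bar>a!j - b!j\<bar>)"
proof -
  have lc: "lcont k (partial_l i g) c" if "i < k" for i
    using sm c that unfolding smooth_fn_def
    by (metis empty_subsetI empty_set insert_subset lessThan_iff list.simps(15) partials_l.simps)
  have "\<forall>i. \<exists>\<delta>. i < k \<longrightarrow> \<delta> > 0 \<and> (\<forall>z. length z = k \<longrightarrow> (\<forall>j<k. \<bar>z!j - c!j\<bar> \<le> \<delta>) \<longrightarrow>
      \<bar>partial_l i g z - partial_l i g c\<bar> < 1)"
    using lcont_eps[OF lc, of _ 1] by auto
  then obtain D where D: "\<And>i. i < k \<Longrightarrow> D i > 0"
    "\<And>i z. i < k \<Longrightarrow> length z = k \<Longrightarrow> (\<forall>j<k. \<bar>z!j - c!j\<bar> \<le> D i) \<Longrightarrow>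
      \<bar>partial_l i g z - partial_l i g c\<bar> < 1"
    by metis
  define \<delta> where "\<delta> = Min (insert 1 (D ` {..<k}))"
  define L where "L = (\<Sum>i<k. \<bar>partial_l i g c\<bar> + 1)"
  have \<delta>pos: "\<delta> > 0" unfolding \<delta>_def using D(1) by (subst Min_gr_iff) auto
  have \<delta>le: "\<delta> \<le> D i" if "i < k" for i unfolding \<delta>_def using that by (intro Min_le) auto
  have Lge: "\<bar>partial_l i g c\<bar> + 1 \<le> L" if "i < k" for i
    unfolding L_def using that by (intro member_le_sum) auto
  have L0: "L \<ge> 0" unfolding L_def by (intro sum_nonneg) auto
  have pb: "\<bar>partial_l i g z\<bar> \<le> L" if "i < k" "length z = k" "\<forall>j<k. \<bar>z!j - c!j\<bar> \<le> \<delta>" for i z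
  proof -
    have "\<forall>j<k. \<bar>z!j - c!j\<bar> \<le> D i" using that \<delta>le[of i] by force
    then have "\<bar>partial_l i g z - partial_l i g c\<bar> < 1" using D(2) that by blast
    then show ?thesis using Lge[OF that(1)] by linarith
  qed
  have main: "\<forall>a b. length a = k \<longrightarrow> length b = k \<longrightarrow>
     (\<forall>j<k. \<bar>a!j - c!j\<bar> \<le> \<delta>) \<longrightarrow> (\<forall>j<k. \<bar>b!j - c!j\<bar> \<le> \<delta>) \<longrightarrow>
     \<bar>g a - g b\<bar> \<le> L * (\<Sum>j<k. \<bar>a!j - b!j\<bar>)"
  proof (intro allI impI)
    fix a b :: "real list"
    assume la: "length a = k" and lb: "length b = k"
      and ba: "\<forall>j<k. \<bar>a!j - c!j\<bar> \<le> \<delta>" and bb: "\<forall>j<k. \<bar>b!j - c!j\<bar> \<le> \<delta>"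
    define C where "C m = map (\<lambda>p. if p < m then b!p else a!p) [0..<k]" for m
    have lC: "length (C m) = k" for m unfolding C_def by simp
    have Cn: "C m ! p = (if p < m then b!p else a!p)" if "p < k" for m p
      unfolding C_def using that by simp
    have C0: "C 0 = a" by (rule nth_equalityI) (use lC la Cn in auto)
    have Ck: "C k = b" by (rule nth_equalityI) (use lC lb Cn in auto)
    have CS: "C (Suc m) = (C m)[m := b!m]" for m
    proof (rule nth_equalityI)
      show "length (C (Suc m)) = length ((C m)[m := b!m])" using lC by simp
      fix i assume "i < length (C (Suc m))"
      then have i: "i < k" using lC by simp
      have "(C m)[m := b!m] ! i = (if i = m then b!m else C m ! i)" using i lC[of m] by (simp add: nth_list_update)
      then show "C (Suc m) ! i = (C m)[m := b!m] ! i" using Cn[OF i, of m] Cn[OF i, of "Suc m"] by auto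
    qed
    have step: "\<bar>g (C (Suc m)) - g (C m)\<bar> \<le> L * \<bar>a!m - b!m\<bar>" if m: "m < k" for m
    proof -
      let ?S = "closed_segment (a!m) (b!m)"
      have inbox: "\<forall>j<k. \<bar>(C m)[m := s] ! j - c!j\<bar> \<le> \<delta>" if s: "s \<in> ?S" for s
      proof (intro allI impI)
        fix j assume j: "j < k"
        show "\<bar>(C m)[m := s] ! j - c!j\<bar> \<le> \<delta>"
        proof (cases "j = m")
          case True
          have "\<bar>a!m - c!m\<bar> \<le> \<delta>" "\<bar>b!m - c!m\<bar> \<le> \<delta>" using ba bb m by auto
          then show ?thesis using True s lC[of m] m
            by (auto simp: closed_segment_eq_real_ivl split: if_splits)
        next
          case False
          then show ?thesis using j lC[of m] Cn[OF j, of m] ba bb by (auto simp: nth_list_update)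
        qed
      qed
      have "norm ((\<lambda>s. g ((C m)[m := s])) (b!m) - (\<lambda>s. g ((C m)[m := s])) (a!m)) \<le> L * norm (b!m - a!m)"
      proof (rule field_differentiable_bound[where S = ?S and f' = "\<lambda>s. partial_l m g ((C m)[m := s])"])
        show "convex ?S" by simp
        show "((\<lambda>s. g ((C m)[m := s])) has_field_derivative partial_l m g ((C m)[m := s])) (at s within ?S)" for s
          using smooth_deriv[OF sm lC m] by (rule has_field_derivative_at_within)
        show "norm (partial_l m g ((C m)[m := s])) \<le> L" if "s \<in> ?S" for s
          using pb[OF m _ inbox[OF that]] lC[of m] by simp
      qed auto
      moreover have "(C m)[m := b!m] = C (Suc m)" using CS by simp
      moreover have "(C m)[m := a!m] = C m" using Cn[OF m, of m] list_update_id[of "C m" m] by simp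
      ultimately show ?thesis by (simp add: abs_minus_commute)
    qed
    have "g b - g a = (\<Sum>m<k. g (C (Suc m)) - g (C m))"
      using sum_lessThan_telescope[of "\<lambda>m. g (C m)" k] C0 Ck by simp
    then have "\<bar>g a - g b\<bar> = \<bar>\<Sum>m<k. g (C (Suc m)) - g (C m)\<bar>" by (simp add: abs_minus_commute)
    also have "\<dots> \<le> (\<Sum>m<k. \<bar>g (C (Suc m)) - g (C m)\<bar>)" by (rule sum_abs)
    also have "\<dots> \<le> (\<Sum>m<k. L * \<bar>a!m - b!m\<bar>)" by (rule sum_mono) (use step in auto)
    also have "\<dots> = L * (\<Sum>m<k. \<bar>a!m - b!m\<bar>)" by (simp add: sum_distrib_left)
    finally have fin: "\<bar>g a - g b\<bar> \<le> L * (\<Sum>j<k. \<bar>a!j - b!j\<bar>)" .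
    then show "\<bar>g a - g b\<bar> \<le> L * (\<Sum>j<k. \<bar>a!j - b!j\<bar>)" by simp
  qed
  show ?thesis using main \<delta>pos L0 by blast
qed



definition near :: "'v list \<Rightarrow> real \<Rightarrow> 'v state \<Rightarrow> 'v state \<Rightarrow> bool" where
  "near xs \<delta> \<omega>0 a \<longleftrightarrow> (\<forall>i<length xs. \<bar>a (Plain (xs!i)) - \<omega>0 (Plain (xs!i))\<bar> \<le> \<delta>) \<and>
     (\<forall>v. v \<notin> set xs \<longrightarrow> a (Plain v) = \<omega>0 (Plain v))"

definition dd :: "'v list \<Rightarrow> 'v state \<Rightarrow> 'v state \<Rightarrow> real" where
  "dd xs a b = (\<Sum>i<length xs. \<bar>a (Plain (xs!i)) - b (Plain (xs!i))\<bar>)"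

definition LL :: "'v list \<Rightarrow> 'v state \<Rightarrow> ('v state \<Rightarrow> real) \<Rightarrow> bool" where
  "LL xs \<omega>0 h \<longleftrightarrow> (\<exists>\<delta>>0. \<exists>L\<ge>0. \<forall>a b. near xs \<delta> \<omega>0 a \<longrightarrow> near xs \<delta> \<omega>0 b \<longrightarrow> \<bar>h a - h b\<bar> \<le> L * dd xs a b)"

lemma dd_nonneg: "dd xs a b \<ge> 0"
  unfolding dd_def by (intro sum_nonneg) auto

lemma near_mono: "near xs \<delta>' \<omega>0 a \<Longrightarrow> \<delta>' \<le> \<delta> \<Longrightarrow> near xs \<delta> \<omega>0 a"
  unfolding near_def by force

lemma near_self: "\<delta> \<ge> 0 \<Longrightarrow> near xs \<delta> \<omega>0 \<omega>0"
  unfolding near_def by simp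

lemma dd_near: "near xs \<delta> \<omega>0 a \<Longrightarrow> dd xs a \<omega>0 \<le> real (length xs) * \<delta>"
proof -
  assume n: "near xs \<delta> \<omega>0 a"
  have "dd xs a \<omega>0 \<le> (\<Sum>i<length xs. \<delta>)" unfolding dd_def
    by (rule sum_mono) (use n in \<open>auto simp: near_def\<close>)
  then show ?thesis by simp
qed

lemma LL_bound:
  assumes "\<forall>a b. near xs \<delta> \<omega>0 a \<longrightarrow> near xs \<delta> \<omega>0 b \<longrightarrow> \<bar>h a - h b\<bar> \<le> L * dd xs a b"
    and "\<delta> \<ge> 0" "L \<ge> 0" "near xs \<delta> \<omega>0 a"
  shows "\<bar>h a\<bar> \<le> \<bar>h \<omega>0\<bar> + L * (real (length xs) * \<delta>)"
proof -
  have "\<bar>h a - h \<omega>0\<bar> \<le> L * dd xs a \<omega>0" using assms near_self by blast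
  also have "\<dots> \<le> L * (real (length xs) * \<delta>)" using mult_left_mono[OF dd_near[OF assms(4)] assms(3)] .
  finally show ?thesis by linarith
qed

lemma LL_intro:
  "\<delta> > 0 \<Longrightarrow> L \<ge> 0 \<Longrightarrow> (\<And>a b. near xs \<delta> \<omega>0 a \<Longrightarrow> near xs \<delta> \<omega>0 b \<Longrightarrow> \<bar>h a - h b\<bar> \<le> L * dd xs a b)
   \<Longrightarrow> LL xs \<omega>0 h"
  unfolding LL_def by blast

lemma LL_const: "LL xs \<omega>0 (\<lambda>s. c)"
  by (rule LL_intro[where \<delta>=1 and L=0]) (simp_all add: dd_nonneg)

lemma LL_var: "LL xs \<omega>0 (\<lambda>s. s (Plain v))"
proof (rule LL_intro[where \<delta>=1 and L=1])
  fix a b assume a: "near xs 1 \<omega>0 a" and b: "near xs 1 \<omega>0 b"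
  show "\<bar>a (Plain v) - b (Plain v)\<bar> \<le> 1 * dd xs a b"
  proof (cases "v \<in> set xs")
    case True
    then obtain i where i: "i < length xs" "v = xs ! i" by (auto simp: in_set_conv_nth)
    have "\<bar>a (Plain (xs!i)) - b (Plain (xs!i))\<bar> \<le> (\<Sum>j<length xs. \<bar>a (Plain (xs!j)) - b (Plain (xs!j))\<bar>)"
      by (rule member_le_sum) (use i in auto)
    then have "\<bar>a (Plain v) - b (Plain v)\<bar> \<le> dd xs a b" unfolding dd_def using i by simp
    then show ?thesis by simp
  next
    case False
    then show ?thesis using a b by (simp add: near_def dd_nonneg)
  qed
qed simp_all

lemma LL_plus:
  assumes "LL xs \<omega>0 f" "LL xs \<omega>0 g"
  shows "LL xs \<omega>0 (\<lambda>s. f s + g s)"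
proof -
  obtain d1 L1 where 1: "d1 > 0" "L1 \<ge> 0" "\<forall>a b. near xs d1 \<omega>0 a \<longrightarrow> near xs d1 \<omega>0 b \<longrightarrow> \<bar>f a - f b\<bar> \<le> L1 * dd xs a b"
    using assms(1) unfolding LL_def by blast
  obtain d2 L2 where 2: "d2 > 0" "L2 \<ge> 0" "\<forall>a b. near xs d2 \<omega>0 a \<longrightarrow> near xs d2 \<omega>0 b \<longrightarrow> \<bar>g a - g b\<bar> \<le> L2 * dd xs a b"
    using assms(2) unfolding LL_def by blast
  show ?thesis
  proof (rule LL_intro[where \<delta>="min d1 d2" and L="L1 + L2"])
    fix a b assume a: "near xs (min d1 d2) \<omega>0 a" and b: "near xs (min d1 d2) \<omega>0 b"
    have "\<bar>f a - f b\<bar> \<le> L1 * dd xs a b" using 1(3) a b near_mono[of xs "min d1 d2" \<omega>0 _ d1] by simp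
    moreover have "\<bar>g a - g b\<bar> \<le> L2 * dd xs a b" using 2(3) a b near_mono[of xs "min d1 d2" \<omega>0 _ d2] by simp
    ultimately show "\<bar>f a + g a - (f b + g b)\<bar> \<le> (L1 + L2) * dd xs a b" by (simp add: algebra_simps)
  qed (use 1 2 in auto)
qed

lemma LL_times:
  assumes "LL xs \<omega>0 f" "LL xs \<omega>0 g"
  shows "LL xs \<omega>0 (\<lambda>s. f s * g s)"
proof -
  obtain d1 L1 where 1: "d1 > 0" "L1 \<ge> 0" "\<forall>a b. near xs d1 \<omega>0 a \<longrightarrow> near xs d1 \<omega>0 b \<longrightarrow> \<bar>f a - f b\<bar> \<le> L1 * dd xs a b"
    using assms(1) unfolding LL_def by blast
  obtain d2 L2 where 2: "d2 > 0" "L2 \<ge> 0" "\<forall>a b. near xs d2 \<omega>0 a \<longrightarrow> near xs d2 \<omega>0 b \<longrightarrow> \<bar>g a - g b\<bar> \<le> L2 * dd xs a b"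
    using assms(2) unfolding LL_def by blast
  define B1 where "B1 = \<bar>f \<omega>0\<bar> + L1 * (real (length xs) * d1)"
  define B2 where "B2 = \<bar>g \<omega>0\<bar> + L2 * (real (length xs) * d2)"
  have B1: "B1 \<ge> 0" unfolding B1_def using 1 by simp
  have B2: "B2 \<ge> 0" unfolding B2_def using 2 by simp
  show ?thesis
  proof (rule LL_intro[where \<delta>="min d1 d2" and L="B1 * L2 + B2 * L1"])
    fix a b assume a: "near xs (min d1 d2) \<omega>0 a" and b: "near xs (min d1 d2) \<omega>0 b"
    have a1: "near xs d1 \<omega>0 a" "near xs d2 \<omega>0 a" using a near_mono by (metis min.cobounded1 min.cobounded2)+
    have b1: "near xs d1 \<omega>0 b" "near xs d2 \<omega>0 b" using b near_mono by (metis min.cobounded1 min.cobounded2)+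
    have fd: "\<bar>f a - f b\<bar> \<le> L1 * dd xs a b" using 1(3) a1 b1 by simp
    have gd: "\<bar>g a - g b\<bar> \<le> L2 * dd xs a b" using 2(3) a1 b1 by simp
    have fa: "\<bar>f a\<bar> \<le> B1" unfolding B1_def using LL_bound[OF 1(3) _ 1(2) a1(1)] 1(1) by simp
    have gb: "\<bar>g b\<bar> \<le> B2" unfolding B2_def using LL_bound[OF 2(3) _ 2(2) b1(2)] 2(1) by simp
    have "\<bar>f a * g a - f b * g b\<bar> = \<bar>f a * (g a - g b) + g b * (f a - f b)\<bar>" by (simp add: algebra_simps)
    also have "\<dots> \<le> \<bar>f a\<bar> * \<bar>g a - g b\<bar> + \<bar>g b\<bar> * \<bar>f a - f b\<bar>"
      using abs_triangle_ineq[of "f a * (g a - g b)" "g b * (f a - f b)"] by (simp add: abs_mult)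
    also have "\<dots> \<le> B1 * (L2 * dd xs a b) + B2 * (L1 * dd xs a b)"
      by (intro add_mono mult_mono fa gb fd gd) (auto simp: B1 B2)
    also have "\<dots> = (B1 * L2 + B2 * L1) * dd xs a b" by (simp add: algebra_simps)
    finally show "\<bar>f a * g a - f b * g b\<bar> \<le> (B1 * L2 + B2 * L1) * dd xs a b" .
  qed (use 1 2 B1 B2 in auto)
qed

lemma LL_list:
  assumes "\<And>h. h \<in> set hs \<Longrightarrow> LL xs \<omega>0 h"
  shows "\<exists>\<delta>>0. \<exists>L\<ge>0. \<forall>a b. near xs \<delta> \<omega>0 a \<longrightarrow> near xs \<delta> \<omega>0 b \<longrightarrow>
           (\<forall>h\<in>set hs. \<bar>h a - h b\<bar> \<le> L * dd xs a b)"
  using assms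
proof (induction hs)
  case Nil
  show ?case by (rule exI[of _ 1], simp, rule exI[of _ 0], simp)
next
  case (Cons h0 hs)
  then obtain d1 L1 where 1: "d1 > 0" "L1 \<ge> 0" "\<forall>a b. near xs d1 \<omega>0 a \<longrightarrow> near xs d1 \<omega>0 b \<longrightarrow>
           (\<forall>h\<in>set hs. \<bar>h a - h b\<bar> \<le> L1 * dd xs a b)" by auto
  obtain d2 L2 where 2: "d2 > 0" "L2 \<ge> 0" "\<forall>a b. near xs d2 \<omega>0 a \<longrightarrow> near xs d2 \<omega>0 b \<longrightarrow> \<bar>h0 a - h0 b\<bar> \<le> L2 * dd xs a b"
    using Cons.prems[of h0] unfolding LL_def by auto
  have main: "\<forall>a b. near xs (min d1 d2) \<omega>0 a \<longrightarrow> near xs (min d1 d2) \<omega>0 b \<longrightarrow>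
           (\<forall>h\<in>set (h0 # hs). \<bar>h a - h b\<bar> \<le> max L1 L2 * dd xs a b)"
  proof (intro allI impI)
    fix a b assume a: "near xs (min d1 d2) \<omega>0 a" and b: "near xs (min d1 d2) \<omega>0 b"
    have a1: "near xs d1 \<omega>0 a" "near xs d2 \<omega>0 a" using a near_mono by (metis min.cobounded1 min.cobounded2)+
    have b1: "near xs d1 \<omega>0 b" "near xs d2 \<omega>0 b" using b near_mono by (metis min.cobounded1 min.cobounded2)+
    have m1: "L1 * dd xs a b \<le> max L1 L2 * dd xs a b" by (rule mult_right_mono) (auto simp: dd_nonneg)
    have m2: "L2 * dd xs a b \<le> max L1 L2 * dd xs a b" by (rule mult_right_mono) (auto simp: dd_nonneg)
    show "\<forall>h\<in>set (h0 # hs). \<bar>h a - h b\<bar> \<le> max L1 L2 * dd xs a b"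
      using 1(3) 2(3) a1 b1 m1 m2 by force
  qed
  show ?case
    by (rule exI[of _ "min d1 d2"], simp add: 1 2, rule exI[of _ "max L1 L2"]) (use main 1 2 in auto)
qed



lemma LL_fn:
  assumes sm: "smooth_fn k g" and len: "length as = k"
    and IH: "\<And>a. a \<in> set as \<Longrightarrow> LL xs \<omega>0 (teval I a)"
  shows "LL xs \<omega>0 (\<lambda>s. g (map (\<lambda>a. teval I a s) as))"
proof -
  obtain \<delta>1 L1 where 1: "\<delta>1 > 0" "L1 \<ge> 0" "\<forall>a b. near xs \<delta>1 \<omega>0 a \<longrightarrow> near xs \<delta>1 \<omega>0 b \<longrightarrow>
           (\<forall>h\<in>set (map (teval I) as). \<bar>h a - h b\<bar> \<le> L1 * dd xs a b)"
  proof -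
    have "\<And>h. h \<in> set (map (teval I) as) \<Longrightarrow> LL xs \<omega>0 h" using IH by auto
    from LL_list[OF this] show ?thesis using that by blast
  qed
  have one1: "\<bar>teval I (as!j) a - teval I (as!j) b\<bar> \<le> L1 * dd xs a b"
    if "near xs \<delta>1 \<omega>0 a" "near xs \<delta>1 \<omega>0 b" "j < k" for a b j
  proof -
    have "teval I (as!j) \<in> set (map (teval I) as)" using that(3) len by simp
    then show ?thesis using 1(3) that(1,2) by blast
  qed
  define c where "c = map (\<lambda>a. teval I a \<omega>0) as"
  have lc: "length c = k" unfolding c_def using len by simp
  obtain \<delta>g Lg where g: "\<delta>g > 0" "Lg \<ge> 0" "\<forall>a b. length a = k \<longrightarrow> length b = k \<longrightarrow>
     (\<forall>j<k. \<bar>a!j - c!j\<bar> \<le> \<delta>g) \<longrightarrow> (\<forall>j<k. \<bar>b!j - c!j\<bar> \<le> \<delta>g) \<longrightarrow>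
     \<bar>g a - g b\<bar> \<le> Lg * (\<Sum>j<k. \<bar>a!j - b!j\<bar>)"
    using smooth_lip[OF sm lc] by blast
  define n where "n = real (length xs)"
  have n0: "n \<ge> 0" unfolding n_def by simp
  define \<delta> where "\<delta> = min \<delta>1 (\<delta>g / ((L1 + 1) * (n + 1)))"
  have \<delta>pos: "\<delta> > 0" unfolding \<delta>_def using 1 g n0 by simp
  have \<delta>1: "\<delta> \<le> \<delta>1" unfolding \<delta>_def by simp
  have \<delta>g: "(L1 + 1) * (n + 1) * \<delta> \<le> \<delta>g"
  proof -
    have "\<delta> \<le> \<delta>g / ((L1 + 1) * (n + 1))" unfolding \<delta>_def by simp
    moreover have "(L1 + 1) * (n + 1) > 0" using 1 n0 by simp
    ultimately show ?thesis by (simp add: pos_le_divide_eq mult.commute)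
  qed
  have key: "L1 * (n * \<delta>) \<le> \<delta>g"
  proof -
    have a: "L1 * \<delta> \<ge> 0" "n * \<delta> \<ge> 0" using 1 n0 \<delta>pos by simp_all
    have "L1 * (n * \<delta>) \<le> (L1 + 1) * (n + 1) * \<delta>" using a \<delta>pos by (simp add: algebra_simps)
    then show ?thesis using \<delta>g by linarith
  qed
  have box: "\<forall>j<k. \<bar>map (\<lambda>a. teval I a s) as ! j - c!j\<bar> \<le> \<delta>g" if s: "near xs \<delta> \<omega>0 s" for s
  proof (intro allI impI)
    fix j assume j: "j < k"
    have s1: "near xs \<delta>1 \<omega>0 s" using near_mono[OF s \<delta>1] .
    have "\<bar>teval I (as!j) s - teval I (as!j) \<omega>0\<bar> \<le> L1 * dd xs s \<omega>0"
      using one1[OF s1 near_self j] 1(1) by simp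
    also have "\<dots> \<le> L1 * (n * \<delta>)" unfolding n_def using dd_near[OF s] 1(2) by (rule mult_left_mono)
    also have "\<dots> \<le> \<delta>g" by (rule key)
    finally show "\<bar>map (\<lambda>a. teval I a s) as ! j - c!j\<bar> \<le> \<delta>g" unfolding c_def using j len by simp
  qed
  show ?thesis
  proof (rule LL_intro[where \<delta>=\<delta> and L="Lg * (real k * L1)"])
    show "0 < \<delta>" by (rule \<delta>pos)
    show "0 \<le> Lg * (real k * L1)" using g 1 by simp
    fix a b assume a: "near xs \<delta> \<omega>0 a" and b: "near xs \<delta> \<omega>0 b"
    have a1: "near xs \<delta>1 \<omega>0 a" using near_mono[OF a \<delta>1] .
    have b1: "near xs \<delta>1 \<omega>0 b" using near_mono[OF b \<delta>1] .
    have "\<bar>g (map (\<lambda>x. teval I x a) as) - g (map (\<lambda>x. teval I x b) as)\<bar>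
        \<le> Lg * (\<Sum>j<k. \<bar>map (\<lambda>x. teval I x a) as ! j - map (\<lambda>x. teval I x b) as ! j\<bar>)"
      using g(3)[rule_format, of "map (\<lambda>x. teval I x a) as" "map (\<lambda>x. teval I x b) as"] box[OF a] box[OF b] len by simp
    also have "\<dots> \<le> Lg * (\<Sum>j<k. L1 * dd xs a b)"
    proof (rule mult_left_mono[OF sum_mono g(2)])
      fix j assume "j \<in> {..<k}"
      then have j: "j < k" by simp
      show "\<bar>map (\<lambda>x. teval I x a) as ! j - map (\<lambda>x. teval I x b) as ! j\<bar> \<le> L1 * dd xs a b"
        using one1[OF a1 b1 j] j len by simp
    qed
    also have "\<dots> = Lg * (real k * L1) * dd xs a b" by simp
    finally show "\<bar>g (map (\<lambda>x. teval I x a) as) - g (map (\<lambda>x. teval I x b) as)\<bar> \<le> Lg * (real k * L1) * dd xs a b" .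
  qed
qed

lemma teval_LL:
  assumes sm: "\<And>g. smooth_fn (ar g) (I g)"
  shows "dfree t \<Longrightarrow> twf ar t \<Longrightarrow> LL xs \<omega>0 (teval I t)"
proof (induction t)
  case (Var v)
  have "teval I (Var v) = (\<lambda>s. s (Plain v))" by (rule ext) simp
  then show ?case using LL_var by simp
next
  case (DVar v)
  then show ?case by simp
next
  case (Const c)
  have "teval I (Const c) = (\<lambda>s. of_rat c)" by (rule ext) simp
  then show ?case using LL_const by simp
next
  case (Plus a b)
  have "teval I (Plus a b) = (\<lambda>s. teval I a s + teval I b s)" by (rule ext) simp
  then show ?case using LL_plus[of xs \<omega>0 "teval I a" "teval I b"] Plus by simp
next
  case (Times a b)
  have "teval I (Times a b) = (\<lambda>s. teval I a s * teval I b s)" by (rule ext) simp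
  then show ?case using LL_times[of xs \<omega>0 "teval I a" "teval I b"] Times by simp
next
  case (Fn g as)
  have "teval I (Fn g as) = (\<lambda>s. I g (map (\<lambda>a. teval I a s) as))" by (rule ext) simp
  moreover have "LL xs \<omega>0 (\<lambda>s. I g (map (\<lambda>a. teval I a s) as))"
    by (rule LL_fn[OF sm[of g]]) (use Fn in auto)
  ultimately show ?case by simp
qed



lemma near_start:
  assumes r: "isrun I xs fs R T u" and T: "T > 0" and \<delta>: "\<delta> > 0"
    and st: "\<And>w. u 0 (Plain w) = \<omega>0 (Plain w)"
  shows "\<exists>d>0. \<forall>t\<in>{0..T}. t < d \<longrightarrow> near xs \<delta> \<omega>0 (u t)"
proof -
  have 0: "(0::real) \<in> {0..T}" using T by simp
  have ev: "eventually (\<lambda>t. \<bar>u t (Plain (xs!i)) - \<omega>0 (Plain (xs!i))\<bar> < \<delta>) (at 0 within {0..T})"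
    if i: "i < length xs" for i
  proof -
    have "continuous (at 0 within {0..T}) (\<lambda>t. u t (Plain (xs!i)))"
      using DERIV_continuous[OF isrunD(5)[OF r 0 T i]] .
    then have "((\<lambda>t. u t (Plain (xs!i))) \<longlongrightarrow> \<omega>0 (Plain (xs!i))) (at 0 within {0..T})"
      unfolding continuous_within using st by simp
    then show ?thesis using \<delta> unfolding tendsto_iff dist_real_def by blast
  qed
  have "eventually (\<lambda>t. \<forall>i\<in>{..<length xs}. \<bar>u t (Plain (xs!i)) - \<omega>0 (Plain (xs!i))\<bar> < \<delta>) (at 0 within {0..T})"
    by (rule eventually_ball_finite) (use ev in auto)
  then obtain d where d: "d > 0" "\<And>t. t \<in> {0..T} \<Longrightarrow> t \<noteq> 0 \<Longrightarrow> dist t 0 < d \<Longrightarrow>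
      \<forall>i\<in>{..<length xs}. \<bar>u t (Plain (xs!i)) - \<omega>0 (Plain (xs!i))\<bar> < \<delta>"
    unfolding eventually_at by blast
  have same: "u t (Plain w) = \<omega>0 (Plain w)" if "t \<in> {0..T}" "w \<notin> set xs" for t w
    using isrunD(4)[OF r that(1), of "Plain w"] that(2) st[of w] by auto
  show ?thesis
  proof (intro exI[of _ d] conjI ballI impI)
    show "d > 0" by (rule d(1))
    fix t assume t: "t \<in> {0..T}" "t < d"
    show "near xs \<delta> \<omega>0 (u t)" unfolding near_def
    proof (intro conjI allI impI)
      fix i assume i: "i < length xs"
      show "\<bar>u t (Plain (xs!i)) - \<omega>0 (Plain (xs!i))\<bar> \<le> \<delta>"
      proof (cases "t = 0")
        case True then show ?thesis using st \<delta> by simp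
      next
        case False
        have "dist t 0 < d" using t by (simp add: dist_real_def)
        then have "\<forall>i\<in>{..<length xs}. \<bar>u t (Plain (xs!i)) - \<omega>0 (Plain (xs!i))\<bar> < \<delta>" using d(2)[OF t(1) False] by blast
        moreover have "i \<in> {..<length xs}" using i by simp
        ultimately show ?thesis by (meson less_imp_le)
      qed
    next
      fix w assume "w \<notin> set xs" then show "u t (Plain w) = \<omega>0 (Plain w)" using same t by blast
    qed
  qed
qed

lemma dd_near2: "near xs \<delta> \<omega>0 a \<Longrightarrow> near xs \<delta> \<omega>0 b \<Longrightarrow> dd xs a b \<le> real (length xs) * (2 * \<delta>)"
proof -
  assume a: "near xs \<delta> \<omega>0 a" and b: "near xs \<delta> \<omega>0 b"
  have "dd xs a b \<le> (\<Sum>i<length xs. 2 * \<delta>)" unfolding dd_def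
  proof (rule sum_mono)
    fix i assume "i \<in> {..<length xs}"
    then have "\<bar>a (Plain (xs!i)) - \<omega>0 (Plain (xs!i))\<bar> \<le> \<delta>" "\<bar>b (Plain (xs!i)) - \<omega>0 (Plain (xs!i))\<bar> \<le> \<delta>"
      using a b by (auto simp: near_def)
    then show "\<bar>a (Plain (xs!i)) - b (Plain (xs!i))\<bar> \<le> 2 * \<delta>" by linarith
  qed
  then show ?thesis by simp
qed

lemma uniq:
  assumes sm: "\<And>g. smooth_fn (ar g) (I g)"
    and len: "length fs = length xs"
    and fdf: "\<And>f. f \<in> set fs \<Longrightarrow> dfree f \<and> twf ar f"
    and ru: "isrun I xs fs R1 T1 u" and rv: "isrun I xs fs R2 T2 v"
    and T1: "T1 > 0" and T2: "T2 > 0"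
    and st: "\<And>w. u 0 (Plain w) = v 0 (Plain w)"
  shows "\<exists>h>0. h \<le> T1 \<and> h \<le> T2 \<and> (\<forall>s\<in>{0..h}. \<forall>w. u s (Plain w) = v s (Plain w))"
proof -
  define \<omega>0 where "\<omega>0 = u 0"
  define n where "n = real (length xs)"
  have "\<And>h. h \<in> set (map (teval I) fs) \<Longrightarrow> LL xs \<omega>0 h"
    using teval_LL[of ar I, OF sm] fdf by auto
  from LL_list[OF this] obtain \<delta> L where DL: "\<delta> > 0" "L \<ge> 0"
    "\<forall>a b. near xs \<delta> \<omega>0 a \<longrightarrow> near xs \<delta> \<omega>0 b \<longrightarrow> (\<forall>h\<in>set (map (teval I) fs). \<bar>h a - h b\<bar> \<le> L * dd xs a b)"
    by blast
  have lip: "\<bar>teval I (fs!i) a - teval I (fs!i) b\<bar> \<le> L * dd xs a b"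
    if "near xs \<delta> \<omega>0 a" "near xs \<delta> \<omega>0 b" "i < length xs" for a b i
  proof -
    have "teval I (fs!i) \<in> set (map (teval I) fs)" using that(3) len by simp
    then show ?thesis using DL(3) that(1,2) by blast
  qed
  obtain d1 where d1: "d1 > 0" "\<forall>t\<in>{0..T1}. t < d1 \<longrightarrow> near xs \<delta> \<omega>0 (u t)"
    using near_start[OF ru T1 DL(1), of \<omega>0] unfolding \<omega>0_def by blast
  obtain d2 where d2: "d2 > 0" "\<forall>t\<in>{0..T2}. t < d2 \<longrightarrow> near xs \<delta> \<omega>0 (v t)"
    using near_start[OF rv T2 DL(1), of \<omega>0] st unfolding \<omega>0_def by metis
  define h where "h = min (min (d1/2) (d2/2)) (min (min T1 T2) (1 / (2 * (n * L + 1))))"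
  have n0: "n \<ge> 0" unfolding n_def by simp
  have nL: "n * L \<ge> 0" using n0 DL(2) by simp
  have hpos: "h > 0" unfolding h_def using d1 d2 T1 T2 nL by simp
  have hT: "h \<le> T1" "h \<le> T2" unfolding h_def by auto
  have nearu: "near xs \<delta> \<omega>0 (u t)" and nearv: "near xs \<delta> \<omega>0 (v t)" if "t \<in> {0..h}" for t
  proof -
    have "t < d1" "t < d2" "t \<in> {0..T1}" "t \<in> {0..T2}" using that hpos d1 d2 hT unfolding h_def by auto
    then show "near xs \<delta> \<omega>0 (u t)" "near xs \<delta> \<omega>0 (v t)" using d1 d2 by auto
  qed
  have hsmall: "n * L * h \<le> 1/2"
  proof -
    have "h \<le> 1 / (2 * (n * L + 1))" unfolding h_def by simp
    then have "(n * L + 1) * h \<le> (n * L + 1) * (1 / (2 * (n * L + 1)))"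
      using nL by (intro mult_left_mono) auto
    also have "\<dots> = 1/2" using nL by (simp add: field_simps)
    finally show ?thesis using hpos by (simp add: algebra_simps)
  qed
  define e where "e t = dd xs (u t) (v t)" for t
  define M where "M = Sup (e ` {0..h})"
  have bdd: "bdd_above (e ` {0..h})"
    unfolding bdd_above_def e_def using dd_near2 nearu nearv by blast
  have eM: "e t \<le> M" if "t \<in> {0..h}" for t unfolding M_def using bdd that by (intro cSup_upper) auto
  have e0: "e t \<ge> 0" for t unfolding e_def by (rule dd_nonneg)
  have M0: "M \<ge> 0" using eM[of 0] e0[of 0] hpos by simp
  define g where "g i t = u t (Plain (xs!i)) - v t (Plain (xs!i))" for i t
  have gb: "\<bar>g i t\<bar> \<le> L * M * h" if i: "i < length xs" and t: "t \<in> {0..h}" for i t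
  proof -
    have sub: "{0..t} \<subseteq> {0..T1}" "{0..t} \<subseteq> {0..T2}" using t hT by auto
    have "norm (g i t - g i 0) \<le> (L * M) * norm (t - 0)"
    proof (rule field_differentiable_bound[where S="{0..t}" and f'="\<lambda>\<tau>. u \<tau> (Diff (xs!i)) - v \<tau> (Diff (xs!i))"])
      show "convex {0..t}" by simp
      fix \<tau> assume \<tau>: "\<tau> \<in> {0..t}"
      have \<tau>1: "\<tau> \<in> {0..T1}" and \<tau>2: "\<tau> \<in> {0..T2}" using \<tau> sub by auto
      have du: "((\<lambda>t. u t (Plain (xs!i))) has_real_derivative u \<tau> (Diff (xs!i))) (at \<tau> within {0..t})"
        using has_field_derivative_subset[OF isrunD(5)[OF ru \<tau>1 T1 i] sub(1)] .
      have dv: "((\<lambda>t. v t (Plain (xs!i))) has_real_derivative v \<tau> (Diff (xs!i))) (at \<tau> within {0..t})"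
        using has_field_derivative_subset[OF isrunD(5)[OF rv \<tau>2 T2 i] sub(2)] .
      show "(g i has_field_derivative u \<tau> (Diff (xs!i)) - v \<tau> (Diff (xs!i))) (at \<tau> within {0..t})"
        unfolding g_def using DERIV_diff[OF du dv] .
      have \<tau>h: "\<tau> \<in> {0..h}" using \<tau> t by auto
      have "\<bar>u \<tau> (Diff (xs!i)) - v \<tau> (Diff (xs!i))\<bar> = \<bar>teval I (fs!i) (u \<tau>) - teval I (fs!i) (v \<tau>)\<bar>"
        using isrunD(2)[OF ru \<tau>1 i] isrunD(2)[OF rv \<tau>2 i] by simp
      also have "\<dots> \<le> L * e \<tau>" unfolding e_def using lip[OF nearu[OF \<tau>h] nearv[OF \<tau>h] i] .
      also have "\<dots> \<le> L * M" using eM[OF \<tau>h] DL(2) by (rule mult_left_mono)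
      finally show "norm (u \<tau> (Diff (xs!i)) - v \<tau> (Diff (xs!i))) \<le> L * M" by simp
    qed (use t in auto)
    moreover have "g i 0 = 0" unfolding g_def using st by simp
    ultimately have "\<bar>g i t\<bar> \<le> L * M * t" using t by simp
    also have "\<dots> \<le> L * M * h" using t DL(2) M0 by (intro mult_left_mono) auto
    finally show ?thesis .
  qed
  have eb: "e t \<le> M / 2" if t: "t \<in> {0..h}" for t
  proof -
    have "e t = (\<Sum>i<length xs. \<bar>g i t\<bar>)" unfolding e_def dd_def g_def by simp
    also have "\<dots> \<le> (\<Sum>i<length xs. L * M * h)" by (rule sum_mono) (use gb t in auto)
    also have "\<dots> = (n * L * h) * M" unfolding n_def by (simp add: algebra_simps)
    also have "\<dots> \<le> (1/2) * M" using hsmall M0 by (rule mult_right_mono)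
    finally show ?thesis by simp
  qed
  have "Sup (e ` {0..h}) \<le> M / 2" using eb hpos by (intro cSup_least) auto
  then have "M \<le> M / 2" using M_def by simp
  then have M00: "M = 0" using M0 by simp
  have eq: "u s (Plain w) = v s (Plain w)" if s: "s \<in> {0..h}" for s w
  proof (cases "w \<in> set xs")
    case True
    then obtain i where i: "i < length xs" "w = xs!i" by (auto simp: in_set_conv_nth)
    have "\<bar>g i s\<bar> \<le> e s" unfolding e_def dd_def g_def
      by (rule member_le_sum[of i "{..<length xs}" "\<lambda>i. \<bar>u s (Plain (xs!i)) - v s (Plain (xs!i))\<bar>", simplified]) (use i in auto)
    then have "g i s = 0" using eM[OF s] M00 by simp
    then show ?thesis unfolding g_def using i by simp
  next
    case False
    then show ?thesis using nearu[OF s] nearv[OF s] by (simp add: near_def)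
  qed
  show ?thesis using hpos hT eq by blast
qed



lemma sem_merge:
  "semianalytic p \<Longrightarrow> (\<And>z. z \<in> fvars p \<Longrightarrow> z \<notin> W) \<Longrightarrow> sem I p (mrg W c s) = sem I p s"
  by (rule sem_sa_coinc) (auto simp: mrg_def)

theorem lemmaA2:
  fixes I :: "'f::finite \<Rightarrow> real list \<Rightarrow> real"
    and ar :: "'f \<Rightarrow> nat"
    and xs ys :: "'v list"
    and fs :: "('v, 'f) trm list"
    and P Q :: "('v, 'f) fml"
  assumes smooth: "\<And>g. smooth_fn (ar g) (I g)"
    and xs_ne: "xs \<noteq> []"
    and xs_dist: "distinct xs"
    and len_fs: "length fs = length xs"
    and fs_df: "\<And>f. f \<in> set fs \<Longrightarrow> dfree f \<and> twf ar f"
    and evolves: "\<And>\<omega>. \<exists>i<length fs. teval I (fs ! i) \<omega> \<noteq> 0"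
    and P_sa: "semianalytic P" and P_wf: "fwf ar P"
    and Q_sa: "semianalytic Q" and Q_wf: "fwf ar Q"
    and len_ys: "length ys = length xs"
    and ys_dist: "distinct ys"
    and ys_fresh: "\<And>y. y \<in> set ys \<Longrightarrow> fresh_in y (Box xs fs Q P)"
  shows "valid I
    (Iff (Box xs fs Q P)
         (ForallV ys
           (Box xs fs (And Q (Or P (EqV xs ys)))
              (Imp (EqV xs ys)
                 (And P
                    (Imp (Dia xs fs (Or Q (EqV xs ys)) (NeqV xs ys))
                         (Dia xs fs (Or P (EqV xs ys)) (NeqV xs ys))))))))"
proof -
  define W where "W = Plain ` set ys"
  define E :: "('v, 'f) fml" where "E = EqV xs ys"
  have fr: "Plain y \<notin> fvars (Box xs fs Q P)" if "y \<in> set ys" for y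
    using ys_fresh[OF that] unfolding fresh_in_def by blast
  have F1: "y \<notin> set xs" if "y \<in> set ys" for y using fr[OF that] by auto
  have F2: "\<And>v. v \<in> set xs \<Longrightarrow> Plain v \<notin> W \<and> Diff v \<notin> W" unfolding W_def using F1 by auto
  have F3: "\<And>i z. i < length xs \<Longrightarrow> z \<in> tvars (fs ! i) \<Longrightarrow> z \<notin> W"
  proof -
    fix i z assume i: "i < length xs" and z: "z \<in> tvars (fs ! i)"
    have "fs ! i \<in> set fs" using i len_fs by simp
    then show "z \<notin> W" unfolding W_def using fr z by fastforce
  qed
  have FQ: "\<And>z. z \<in> fvars Q \<Longrightarrow> z \<notin> W" unfolding W_def using fr by fastforce
  have FP: "\<And>z. z \<in> fvars P \<Longrightarrow> z \<notin> W" unfolding W_def using fr by fastforce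
  have Qm: "sem I Q (mrg W c s) = sem I Q s" for c s using sem_merge[OF Q_sa FQ] .
  have Pm: "sem I P (mrg W c s) = sem I P s" for c s using sem_merge[OF P_sa FP] .
  have semE: "sem I E s \<longleftrightarrow> (\<forall>i<length xs. s (Plain (xs!i)) = s (Plain (ys!i)))" for s
    unfolding E_def using sem_EqV[OF len_ys[symmetric]] .
  have dfs: "\<And>f. f \<in> set fs \<Longrightarrow> dfree f" using fs_df by blast
  have yx: "ys ! i \<notin> set xs" if "i < length xs" for i using F1 that len_ys by simp
  have yconst: "\<phi> \<zeta> (Plain (ys!i)) = \<phi> 0 (Plain (ys!i))"
    if "isrun I xs fs R T \<phi>" "\<zeta> \<in> {0..T}" "i < length xs" for R T \<phi> \<zeta> i
    using isrunD(4)[OF that(1,2), of "Plain (ys!i)"] yx[OF that(3)] by auto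
  define X where "X = Box xs fs (And Q (Or P E)) (Imp E (And P (Imp (Dia xs fs (Or Q E) (NeqV xs ys)) (Dia xs fs (Or P E) (NeqV xs ys)))))"
  have main: "sem I (Box xs fs Q P) \<omega> \<longleftrightarrow> (\<forall>\<omega>'. (\<forall>z. z \<notin> W \<longrightarrow> \<omega>' z = \<omega> z) \<longrightarrow> sem I X \<omega>')" for \<omega>
  proof
    assume A: "sem I (Box xs fs Q P) \<omega>"
    show "\<forall>\<omega>'. (\<forall>z. z \<notin> W \<longrightarrow> \<omega>' z = \<omega> z) \<longrightarrow> sem I X \<omega>'"
    proof (intro allI impI)
      fix \<omega>' assume ag: "\<forall>z. z \<notin> W \<longrightarrow> \<omega>' z = \<omega> z"
      have QP: "sem I P (\<phi> T)" if r: "isrun I xs fs (sem I Q) T \<phi>" and st: "\<forall>z. z \<notin> Diff ` set xs \<longrightarrow> \<phi> 0 z = \<omega>' z"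
        for T \<phi>
      proof -
        have test: "sem I Q (mrg W \<omega> (\<phi> 0)) = sem I Q (\<phi> 0)" by (rule Qm)
        have r': "isrun I xs fs (sem I Q) T (\<lambda>t. mrg W \<omega> (\<phi> t))"
        proof (rule isrun_merge[OF r F2 F3])
          fix \<zeta> assume "sem I Q (\<phi> \<zeta>)"
          then show "sem I Q (mrg W \<omega> (\<phi> \<zeta>))" using Qm[of \<omega> "\<phi> \<zeta>"] by simp
        qed
        have "ode_rel I xs fs (sem I Q) \<omega> (mrg W \<omega> (\<phi> T))"
          unfolding ode_rel_iff
          by (rule exI[of _ T], rule exI[of _ "\<lambda>t. mrg W \<omega> (\<phi> t)"]) (use r' st ag in \<open>auto simp: mrg_def\<close>)
        then have "sem I P (mrg W \<omega> (\<phi> T))" using A by simp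
        then show ?thesis by (simp add: Pm)
      qed
      show "sem I X \<omega>'" unfolding X_def
      proof (simp only: sem.simps sem_Imp, intro allI impI)
        fix \<nu> assume rel: "ode_rel I xs fs (sem I (And Q (Or P E))) \<omega>' \<nu>" and Ev: "sem I E \<nu>"
        obtain T \<phi> where r: "isrun I xs fs (sem I (And Q (Or P E))) T \<phi>"
          and st: "\<forall>z. z \<notin> Diff ` set xs \<longrightarrow> \<phi> 0 z = \<omega>' z" and en: "\<phi> T = \<nu>"
          using rel unfolding ode_rel_iff by blast
        have rQ: "isrun I xs fs (sem I Q) T \<phi>" by (rule isrun_mono[OF r]) simp
        have T0: "T \<ge> 0" using isrunD(1)[OF r] .
        have TT: "T \<in> {0..T}" using T0 by simp
        have Pnu: "sem I P \<nu>" using QP[OF rQ st] en by simp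
        have Qnu: "sem I Q \<nu>" using isrunD(3)[OF rQ TT] en by simp
        have nueq: "\<nu> (Diff (xs ! i)) = teval I (fs ! i) \<nu>" if "i < length xs" for i
          using isrunD(2)[OF r TT that] en by simp
        show "sem I P \<nu> \<and> ((\<exists>\<mu>. ode_rel I xs fs (sem I (Or Q E)) \<nu> \<mu> \<and> sem I (NeqV xs ys) \<mu>) \<longrightarrow>
                (\<exists>\<mu>. ode_rel I xs fs (sem I (Or P E)) \<nu> \<mu> \<and> sem I (NeqV xs ys) \<mu>))"
        proof (intro conjI impI Pnu)
          assume "\<exists>\<mu>. ode_rel I xs fs (sem I (Or Q E)) \<nu> \<mu> \<and> sem I (NeqV xs ys) \<mu>"
          then obtain \<mu> T2 \<psi> where r2: "isrun I xs fs (sem I (Or Q E)) T2 \<psi>"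
            and st2: "\<forall>z. z \<notin> Diff ` set xs \<longrightarrow> \<psi> 0 z = \<nu> z" and en2: "\<psi> T2 = \<mu>"
            and nE: "\<not> sem I E \<mu>"
            unfolding ode_rel_iff E_def by auto
          have p0: "\<psi> 0 = \<nu>" by (rule isrun_start[OF r2 len_fs dfs]) (use st2 nueq in auto)
          have T2: "T2 > 0"
          proof (rule ccontr)
            assume "\<not> T2 > 0"
            then have "T2 = 0" using isrunD(1)[OF r2] by simp
            then show False using p0 en2 nE Ev by simp
          qed
          obtain i where i: "i < length xs" "teval I (fs ! i) \<nu> \<noteq> 0" using evolves[of \<nu>] len_fs by auto
          have z0: "(0::real) \<in> {0..T2}" using T2 by simp
          have der: "((\<lambda>t. \<psi> t (Plain (xs ! i))) has_real_derivative \<psi> 0 (Diff (xs ! i))) (at 0 within {0..T2})"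
            using isrunD(5)[OF r2 z0 T2 i(1)] .
          have "\<psi> 0 (Diff (xs ! i)) \<noteq> 0" using p0 nueq[OF i(1)] i(2) by simp
          from local_evol[OF der this order.refl T2] obtain h where h: "h > 0" "h \<le> T2"
            "\<And>s. 0 < s \<Longrightarrow> s \<le> h \<Longrightarrow> \<psi> s (Plain (xs ! i)) \<noteq> \<psi> 0 (Plain (xs ! i))"
            by auto
          have nEs: "\<not> sem I E (\<psi> s)" if "0 < s" "s \<le> h" for s
          proof -
            have "\<psi> s (Plain (ys ! i)) = \<psi> 0 (Plain (ys ! i))"
              using yconst[OF r2 _ i(1), of s] that h by simp
            moreover have "\<psi> 0 (Plain (xs ! i)) = \<psi> 0 (Plain (ys ! i))" using Ev p0 i(1) semE by simp
            ultimately show ?thesis using h(3)[OF that] semE i(1) by auto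
          qed
          have Qs: "sem I Q (\<psi> s)" if "s \<in> {0..h}" for s
          proof (cases "s = 0")
            case True then show ?thesis using p0 Qnu by simp
          next
            case False
            then have "0 < s" "s \<le> h" using that by auto
            moreover have "s \<in> {0..T2}" using that h by auto
            ultimately show ?thesis using isrunD(3)[OF r2, of s] nEs by auto
          qed
          have PE: "sem I (Or P E) (\<psi> s)" if s: "s \<in> {0..h}" for s
          proof (cases "s = 0")
            case True then show ?thesis using p0 Ev by simp
          next
            case False
            then have s0: "s > 0" using s by simp
            have rs: "isrun I xs fs (sem I Q) s \<psi>"
              by (rule isrun_mono[OF isrun_prefix[OF r2]]) (use s h Qs in auto)
            have "\<psi> 0 = \<phi> T" using p0 en by simp
            from isrun_concat[OF rQ rs this]
            have rc: "isrun I xs fs (sem I Q) (T + s) (\<lambda>t. if t \<le> T then \<phi> t else \<psi> (t - T))" .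
            have "sem I P ((\<lambda>t. if t \<le> T then \<phi> t else \<psi> (t - T)) (T + s))"
              by (rule QP[OF rc]) (use st T0 in simp)
            then show ?thesis using s0 by simp
          qed
          have rh: "isrun I xs fs (sem I (Or P E)) h \<psi>"
            by (rule isrun_mono[OF isrun_prefix[OF r2]]) (use h PE in auto)
          show "\<exists>\<mu>. ode_rel I xs fs (sem I (Or P E)) \<nu> \<mu> \<and> sem I (NeqV xs ys) \<mu>"
          proof (intro exI conjI)
            show "ode_rel I xs fs (sem I (Or P E)) \<nu> (\<psi> h)"
              unfolding ode_rel_iff using rh p0 by blast
            show "sem I (NeqV xs ys) (\<psi> h)" using nEs[OF h(1) order.refl] E_def by simp
          qed
        qed
      qed
    qed
  next
    assume B: "\<forall>\<omega>'. (\<forall>z. z \<notin> W \<longrightarrow> \<omega>' z = \<omega> z) \<longrightarrow> sem I X \<omega>'"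
    show "sem I (Box xs fs Q P) \<omega>"
    proof (simp only: sem.simps, intro allI impI, rule ccontr)
      fix \<nu> assume rel: "ode_rel I xs fs (sem I Q) \<omega> \<nu>" and nP: "\<not> sem I P \<nu>"
      obtain T \<phi> where r: "isrun I xs fs (sem I Q) T \<phi>"
        and st: "\<forall>z. z \<notin> Diff ` set xs \<longrightarrow> \<phi> 0 z = \<omega> z" and en: "\<phi> T = \<nu>"
        using rel unfolding ode_rel_iff by blast
      have T0: "T \<ge> 0" using isrunD(1)[OF r] .
      define S where "S = {t\<in>{0..T}. \<not> sem I P (\<phi> t)}"
      define t0 where "t0 = Inf S"
      have TS: "T \<in> S" unfolding S_def using T0 en nP by simp
      have Sne: "S \<noteq> {}" using TS by blast
      have Sbdd: "bdd_below S" unfolding S_def bdd_below_def by auto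
      have t00: "0 \<le> t0" unfolding t0_def by (rule cInf_greatest[OF Sne]) (auto simp: S_def)
      have t0T: "t0 \<le> T" unfolding t0_def by (rule cInf_lower[OF TS Sbdd])
      have t0I: "t0 \<in> {0..T}" using t00 t0T by simp
      have Pbef: "sem I P (\<phi> t)" if "t \<in> {0..T}" "t < t0" for t
      proof (rule ccontr)
        assume "\<not> sem I P (\<phi> t)"
        then have "t \<in> S" unfolding S_def using that by simp
        then have "t0 \<le> t" unfolding t0_def by (rule cInf_lower[OF _ Sbdd])
        then show False using that by simp
      qed
      define c where "c = (\<lambda>z. case z of Plain v \<Rightarrow> (case map_of (zip ys xs) v of Some x \<Rightarrow> \<phi> t0 (Plain x) | None \<Rightarrow> 0) | Diff v \<Rightarrow> 0)"
      have cy: "c (Plain (ys ! j)) = \<phi> t0 (Plain (xs ! j))" if "j < length xs" for j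
        unfolding c_def using map_of_zip_nth[of ys xs j] len_ys ys_dist that by simp
      define \<omega>' where "\<omega>' = mrg W c \<omega>"
      have ag: "\<forall>z. z \<notin> W \<longrightarrow> \<omega>' z = \<omega> z" unfolding \<omega>'_def mrg_def by simp
      have xW: "Plain (xs ! j) \<notin> W" if "j < length xs" for j using F2[of "xs ! j"] that by simp
      have yW: "Plain (ys ! j) \<in> W" if "j < length xs" for j unfolding W_def using that len_ys by simp
      have Et0: "sem I E (mrg W c (\<phi> t0))"
        unfolding semE using xW yW cy by (simp add: mrg_def)
      have r0: "isrun I xs fs (sem I Q) t0 \<phi>" by (rule isrun_prefix[OF r t00 t0T])
      have r0': "isrun I xs fs (sem I (And Q (Or P E))) t0 (\<lambda>t. mrg W c (\<phi> t))"
      proof (rule isrun_merge[OF r0 F2 F3])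
        fix \<zeta> assume z: "\<zeta> \<in> {0..t0}" and q: "sem I Q (\<phi> \<zeta>)"
        have "sem I Q (mrg W c (\<phi> \<zeta>))" using q Qm[of c "\<phi> \<zeta>"] by simp
        moreover have "sem I P (mrg W c (\<phi> \<zeta>)) \<or> sem I E (mrg W c (\<phi> \<zeta>))"
        proof (cases "\<zeta> < t0")
          case True
          then have "sem I P (\<phi> \<zeta>)" using Pbef z t0T by simp
          then show ?thesis using Pm[of c "\<phi> \<zeta>"] by simp
        next
          case False
          then have "\<zeta> = t0" using z by simp
          then show ?thesis using Et0 by simp
        qed
        ultimately show "sem I (And Q (Or P E)) (mrg W c (\<phi> \<zeta>))" by simp
      qed
      have "ode_rel I xs fs (sem I (And Q (Or P E))) \<omega>' (mrg W c (\<phi> t0))"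
        unfolding ode_rel_iff
        by (rule exI[of _ t0], rule exI[of _ "\<lambda>t. mrg W c (\<phi> t)"]) (use r0' st in \<open>auto simp: mrg_def \<omega>'_def\<close>)
      then have post: "sem I (Imp E (And P (Imp (Dia xs fs (Or Q E) (NeqV xs ys)) (Dia xs fs (Or P E) (NeqV xs ys))))) (mrg W c (\<phi> t0))"
        using B ag unfolding X_def by simp
      have Pt0: "sem I P (\<phi> t0)" using post Et0 Pm[of c "\<phi> t0"] by simp
      have DD: "sem I (Dia xs fs (Or Q E) (NeqV xs ys)) (mrg W c (\<phi> t0)) \<Longrightarrow> sem I (Dia xs fs (Or P E) (NeqV xs ys)) (mrg W c (\<phi> t0))"
        using post Et0 by simp
      have t0S: "t0 \<notin> S" using Pt0 unfolding S_def by simp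
      have t0T': "t0 < T" using t0T t0S TS by (cases "t0 = T") auto
      have Tpos: "T > 0" using t00 t0T' by simp
      obtain i where i: "i < length xs" "teval I (fs ! i) (\<phi> t0) \<noteq> 0" using evolves[of "\<phi> t0"] len_fs by auto
      have der: "((\<lambda>t. \<phi> t (Plain (xs ! i))) has_real_derivative \<phi> t0 (Diff (xs ! i))) (at t0 within {0..T})"
        using isrunD(5)[OF r t0I Tpos i(1)] .
      have "\<phi> t0 (Diff (xs ! i)) \<noteq> 0" using isrunD(2)[OF r t0I i(1)] i(2) by simp
      from local_evol[OF der this t00 t0T'] obtain h1 where h1: "h1 > 0" "h1 \<le> T - t0"
        "\<And>s. 0 < s \<Longrightarrow> s \<le> h1 \<Longrightarrow> \<phi> (t0 + s) (Plain (xs ! i)) \<noteq> \<phi> t0 (Plain (xs ! i))"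
        by auto
      define u where "u = (\<lambda>s. mrg W c (\<phi> (s + t0)))"
      have ru: "isrun I xs fs (sem I Q) (T - t0) u"
        unfolding u_def
      proof (rule isrun_merge[OF isrun_suffix[OF r t00 t0T] F2 F3])
        fix \<zeta> assume "sem I Q (\<phi> (\<zeta> + t0))"
        then show "sem I Q (mrg W c (\<phi> (\<zeta> + t0)))" using Qm[of c "\<phi> (\<zeta> + t0)"] by simp
      qed
      have u0: "u 0 = mrg W c (\<phi> t0)" unfolding u_def by simp
      have uy: "u s (Plain (ys ! j)) = \<phi> t0 (Plain (xs ! j))" if "j < length xs" for s j
        unfolding u_def mrg_def using yW[OF that] cy[OF that] by simp
      have ux: "u s (Plain (xs ! j)) = \<phi> (s + t0) (Plain (xs ! j))" if "j < length xs" for s j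
        unfolding u_def mrg_def using xW[OF that] by simp
      have nEu: "\<not> sem I E (u s)" if "0 < s" "s \<le> h1" for s
        unfolding semE using ux[OF i(1), of s] uy[OF i(1), of s] h1(3)[OF that] i(1) by (auto simp: add.commute)
      have "sem I (Dia xs fs (Or Q E) (NeqV xs ys)) (mrg W c (\<phi> t0))"
      proof -
        have "isrun I xs fs (sem I (Or Q E)) h1 u"
          by (rule isrun_mono[OF isrun_prefix[OF ru]]) (use h1 in auto)
        have "ode_rel I xs fs (sem I (Or Q E)) (mrg W c (\<phi> t0)) (u h1)"
          unfolding ode_rel_iff by (rule exI[of _ h1], rule exI[of _ u]) (use u0 \<open>isrun I xs fs (sem I (Or Q E)) h1 u\<close> in auto)
        then show ?thesis using nEu[OF h1(1) order.refl] E_def by auto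
      qed
      then have "sem I (Dia xs fs (Or P E) (NeqV xs ys)) (mrg W c (\<phi> t0))" by (rule DD)
      then obtain \<mu> where rel2: "ode_rel I xs fs (sem I (Or P E)) (mrg W c (\<phi> t0)) \<mu>" and nE: "\<not> sem I E \<mu>"
        unfolding E_def by auto
      then obtain T2 \<psi> where r2: "isrun I xs fs (sem I (Or P E)) T2 \<psi>"
        and st2: "\<forall>z. z \<notin> Diff ` set xs \<longrightarrow> \<psi> 0 z = mrg W c (\<phi> t0) z" and en2: "\<psi> T2 = \<mu>"
        unfolding ode_rel_iff by blast
      have psiP: "\<psi> 0 (Plain w) = u 0 (Plain w)" for w using st2 u0 by auto
      have T2: "T2 > 0"
      proof (rule ccontr)
        assume "\<not> T2 > 0"
        then have "T2 = 0" using isrunD(1)[OF r2] by simp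
        then have "\<mu> = \<psi> 0" using en2 by simp
        then have "sem I E \<mu>" using Et0 psiP u0 unfolding semE by simp
        then show False using nE by simp
      qed
      have Tt0: "T - t0 > 0" using t0T' by simp
      obtain h where h: "h > 0" "h \<le> T - t0" "h \<le> T2" "\<forall>s\<in>{0..h}. \<forall>w. u s (Plain w) = \<psi> s (Plain w)"
        using uniq[OF smooth len_fs fs_df ru r2 Tt0 T2] psiP by metis
      have "Inf S < t0 + min h h1" using h(1) h1(1) unfolding t0_def by simp
      then obtain t where tS: "t \<in> S" and tl: "t < t0 + min h h1" using cInf_less_iff[OF Sne Sbdd] by blast
      have tge: "t0 \<le> t" unfolding t0_def by (rule cInf_lower[OF tS Sbdd])
      have tne: "t \<noteq> t0" using tS t0S by blast
      define s where "s = t - t0"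
      have s: "0 < s" "s \<le> h" "s \<le> h1" using tge tne tl unfolding s_def by auto
      have sI: "s \<in> {0..T2}" using s h by auto
      have us: "u s (Plain w) = \<psi> s (Plain w)" for w using h(4) s by auto
      have "\<not> sem I E (\<psi> s)"
      proof
        assume "sem I E (\<psi> s)"
        then have "sem I E (u s)" unfolding semE using us by simp
        then show False using nEu[OF s(1) s(3)] by simp
      qed
      then have "sem I P (\<psi> s)" using isrunD(3)[OF r2 sI] by simp
      then have "sem I P (u s)" using sem_sa_plain[OF P_sa, of "u s" "\<psi> s"] us by simp
      then have "sem I P (\<phi> (s + t0))" unfolding u_def using Pm[of c "\<phi> (s + t0)"] by simp
      moreover have "s + t0 = t" unfolding s_def by simp
      ultimately show False using tS unfolding S_def by simp
    qed
  qed
  show ?thesis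
    unfolding valid_def sem_Iff sem_ForallV using main unfolding X_def E_def W_def by blast
qed

end
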